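(* Let $x_{\max}>0$, $T>0$, $\Omega=(0,x_{\max})$, and let $r,\sigma:[0,T]\to\mathbb{R}$ be sufficiently smooth with $0\le r(t)\le \bar r$ and $\underline{\sigma}\le\sigma(t)\le\bar\sigma$ for all $t\in[0,T]$, for some constants $\bar r$, $\underline{\sigma}$, $\bar\sigma$. Put $\beta=\sup_{t\in[0,T]}\sigma^2(t)$, $a(t)=\tfrac12\sigma^2(t)$, $b(t)=r(t)-\sigma^2(t)$, $c(t)=2r(t)+\beta-\sigma^2(t)$, and for $t\in[0,T]$ and $u,v\in H^1_{0,\omega}(\Omega)$ define $$A(u,v;t)=\big(a(t)x^2u'+b(t)xu,\,v'\big)+\big(c(t)u,\,v\big),$$ where $(\cdot,\cdot)$ is the $L^2(\Omega)$ inner product. Then there exist positive constants $C$ and $M$ such that for all $v,z\in H^1_{0,\omega}(\Omega)$, $$A(v,v;t)\ge C\,\|v\|_{1,\omega}^2,\qquad A(z,v;t)\le M\,\|z\|_{1,\omega}\,\|v\|_{1,\omega}.$$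
   Context: The weighted space $L^2_\omega(\Omega)$ consists of measurable $v$ with $\|v\|_\omega=\big(\int_\Omega x^2v^2\,dx\big)^{1/2}<\infty$. The weighted Sobolev space is $H^1_\omega(\Omega)=\{v\in L^2(\Omega):$ there is $g\in L^2_\omega(\Omega)$ with $\int_\Omega v\varphi'=-\int_\Omega g\varphi$ for all $\varphi\in C_c(\Omega)\}$, with $v'=g$ the weak derivative, and $H^1_{0,\omega}(\Omega)=\{v\in H^1_\omega(\Omega): v|_{\partial\Omega}=0\}$. Its norm is $\|v\|_{1,\omega}=\big(\|v\|_{L^2(\Omega)}^2+\|v'\|_\omega^2\big)^{1/2}=\big((v,v)+(x^2v',v')\big)^{1/2}$. *)

theory Defs
  imports "HOL-Analysis.Analysis"
begin

definition Omega :: "real \<Rightarrow> real set" where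
  "Omega xm = {0<..<xm}"

definition L2 :: "real \<Rightarrow> (real \<Rightarrow> real) \<Rightarrow> bool" where
  "L2 xm v \<longleftrightarrow> set_borel_measurable lborel (Omega xm) v \<and>
     set_integrable lborel (Omega xm) (\<lambda>x. (v x)^2)"

definition L2w :: "real \<Rightarrow> (real \<Rightarrow> real) \<Rightarrow> bool" where
  "L2w xm g \<longleftrightarrow> set_borel_measurable lborel (Omega xm) g \<and>
     set_integrable lborel (Omega xm) (\<lambda>x. x^2 * (g x)^2)"

definition smooth_fun :: "(real \<Rightarrow> real) \<Rightarrow> bool" where
  "smooth_fun \<phi> \<longleftrightarrow> (\<forall>n x. ((deriv ^^ n) \<phi>) differentiable (at x))"

definition test_fun :: "real \<Rightarrow> (real \<Rightarrow> real) \<Rightarrow> bool" where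
  "test_fun xm \<phi> \<longleftrightarrow> smooth_fun \<phi> \<and>
     (\<exists>a b. 0 < a \<and> a \<le> b \<and> b < xm \<and> (\<forall>x. x \<notin> {a..b} \<longrightarrow> \<phi> x = 0))"

definition weak_deriv :: "real \<Rightarrow> (real \<Rightarrow> real) \<Rightarrow> (real \<Rightarrow> real) \<Rightarrow> bool" where
  "weak_deriv xm v g \<longleftrightarrow> (\<forall>\<phi>. test_fun xm \<phi> \<longrightarrow>
     (LINT x:Omega xm|lborel. v x * deriv \<phi> x) = - (LINT x:Omega xm|lborel. g x * \<phi> x))"

definition H1w :: "real \<Rightarrow> (real \<Rightarrow> real) \<Rightarrow> (real \<Rightarrow> real) \<Rightarrow> bool" where
  "H1w xm v g \<longleftrightarrow> L2 xm v \<and> L2w xm g \<and> weak_deriv xm v g"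

text \<open>v in H^1_{0,omega}(Omega) with weak derivative g: the continuous representative
  of v vanishes on the boundary {0, xm}.\<close>
definition H10w :: "real \<Rightarrow> (real \<Rightarrow> real) \<Rightarrow> (real \<Rightarrow> real) \<Rightarrow> bool" where
  "H10w xm v g \<longleftrightarrow> H1w xm v g \<and>
     (\<exists>w. (AE x in lborel. x \<in> Omega xm \<longrightarrow> w x = v x) \<and> continuous_on (Omega xm) w \<and>
          (w \<longlongrightarrow> 0) (at_right 0) \<and> (w \<longlongrightarrow> 0) (at_left xm))"

definition norm1w :: "real \<Rightarrow> (real \<Rightarrow> real) \<Rightarrow> (real \<Rightarrow> real) \<Rightarrow> real" where
  "norm1w xm v g = sqrt ((LINT x:Omega xm|lborel. (v x)^2) + (LINT x:Omega xm|lborel. x^2 * (g x)^2))"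

text \<open>The bilinear form A(z,v;t), with gz, gv the weak derivatives of z, v.\<close>
definition bilinA :: "real \<Rightarrow> (real \<Rightarrow> real) \<Rightarrow> (real \<Rightarrow> real) \<Rightarrow> real \<Rightarrow> real
     \<Rightarrow> (real \<Rightarrow> real) \<Rightarrow> (real \<Rightarrow> real) \<Rightarrow> (real \<Rightarrow> real) \<Rightarrow> (real \<Rightarrow> real) \<Rightarrow> real" where
  "bilinA xm r \<sigma> T t z gz v gv =
    (let \<beta> = (SUP s\<in>{0..T}. (\<sigma> s)^2);
         a = (\<sigma> t)^2 / 2;
         b = r t - (\<sigma> t)^2;
         c = 2 * r t + \<beta> - (\<sigma> t)^2
     in (LINT x:Omega xm|lborel. (a * x^2 * gz x + b * x * z x) * gv x)
        + (LINT x:Omega xm|lborel. c * z x * v x))"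

end

theory Submission
  imports Defs "HOL-Computational_Algebra.Polynomial"
begin

definition sm :: "(real \<Rightarrow> real) \<Rightarrow> bool" where
  "sm f \<longleftrightarrow> (\<exists>F. F 0 = f \<and> (\<forall>n x. (F n has_real_derivative F (Suc n) x) (at x)))"

lemma sm_smooth:
  assumes "sm f"
  shows "smooth_fun f" "\<And>x. (f has_real_derivative deriv f x) (at x)"
proof -
  obtain F where F0: "F 0 = f" and FD: "\<And>n x. (F n has_real_derivative F (Suc n) x) (at x)"
    using assms unfolding sm_def by blast
  have eq: "(deriv ^^ n) f = F n" for n
  proof (induction n)
    case 0 then show ?case using F0 by simp
  next
    case (Suc n)
    show ?case using Suc FD by (auto intro!: ext DERIV_imp_deriv)
  qed
  show "smooth_fun f" unfolding smooth_fun_def eq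
    using FD real_differentiable_def by blast
  show "(f has_real_derivative deriv f x) (at x)" for x
    using eq[of 1] FD[of 0 x] F0 by simp
qed

lemma sm_antider:
  assumes "sm k" "\<And>x. (K has_real_derivative k x) (at x)"
  shows "sm K"
proof -
  obtain F where F0: "F 0 = k" and FD: "\<And>n x. (F n has_real_derivative F (Suc n) x) (at x)"
    using assms unfolding sm_def by blast
  define G where "G n = (case n of 0 \<Rightarrow> K | Suc m \<Rightarrow> F m)" for n
  have "G 0 = K" by (simp add: G_def)
  moreover have "(G n has_real_derivative G (Suc n) x) (at x)" for n x
    using assms(2) FD F0 by (cases n) (auto simp: G_def)
  ultimately show ?thesis unfolding sm_def by blast
qed

lemma sm_affine:
  assumes "sm f"
  shows "sm (\<lambda>x. f (c * x + d))"
proof -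
  obtain F where F0: "F 0 = f" and FD: "\<And>n x. (F n has_real_derivative F (Suc n) x) (at x)"
    using assms unfolding sm_def by blast
  define G where "G n x = c ^ n * F n (c * x + d)" for n x
  have "G 0 = (\<lambda>x. f (c * x + d))" by (simp add: fun_eq_iff G_def F0)
  moreover have "(G n has_real_derivative G (Suc n) x) (at x)" for n x
  proof -
    have "((\<lambda>x. F n (c * x + d)) has_real_derivative F (Suc n) (c * x + d) * c) (at x)"
      by (rule DERIV_chain2[OF FD]) (auto intro!: derivative_eq_intros)
    then have "((\<lambda>x. c ^ n * F n (c * x + d)) has_real_derivative c ^ n * (F (Suc n) (c * x + d) * c)) (at x)"
      by (rule DERIV_cmult)
    moreover have "G n = (\<lambda>x. c ^ n * F n (c * x + d))" by (simp add: fun_eq_iff G_def)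
    moreover have "c ^ n * (F (Suc n) (c * x + d) * c) = G (Suc n) x" by (simp add: G_def)
    ultimately show ?thesis by simp
  qed
  ultimately show ?thesis unfolding sm_def by blast
qed

lemma sm_lin:
  assumes "sm f" "sm g"
  shows "sm (\<lambda>x. a * f x + b * g x)"
proof -
  obtain F where F0: "F 0 = f" and FD: "\<And>n x. (F n has_real_derivative F (Suc n) x) (at x)"
    using assms unfolding sm_def by blast
  obtain G where G0: "G 0 = g" and GD: "\<And>n x. (G n has_real_derivative G (Suc n) x) (at x)"
    using assms unfolding sm_def by blast
  define H where "H n x = a * F n x + b * G n x" for n x
  have "H 0 = (\<lambda>x. a * f x + b * g x)" by (simp add: fun_eq_iff H_def F0 G0)
  moreover have "(H n has_real_derivative H (Suc n) x) (at x)" for n x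
    unfolding H_def by (rule DERIV_add[OF DERIV_cmult[OF FD] DERIV_cmult[OF GD]])
  ultimately show ?thesis unfolding sm_def by blast
qed

lemma Suc_choose': "Suc n choose k = (n choose k) + (if k = 0 then 0 else (n choose (k-1)))"
  by (cases k) auto

lemma sm_mult:
  assumes "sm f" "sm g"
  shows "sm (\<lambda>x. f x * g x)"
proof -
  obtain F where F0: "F 0 = f" and FD: "\<And>n x. (F n has_real_derivative F (Suc n) x) (at x)"
    using assms unfolding sm_def by blast
  obtain G where G0: "G 0 = g" and GD: "\<And>n x. (G n has_real_derivative G (Suc n) x) (at x)"
    using assms unfolding sm_def by blast
  define H where "H n x = (\<Sum>i = 0..n. of_nat (n choose i) * F i x * G (n-i) x)" for n x
  have "H 0 = (\<lambda>x. f x * g x)" by (simp add: fun_eq_iff H_def F0 G0)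
  moreover have "(H n has_real_derivative H (Suc n) x) (at x)" for n x
  proof -
    have sumeq: "(\<Sum>i = 0..n.
               of_nat (n choose i) * (F (Suc i) x * G (n-i) x + G (Suc (n-i)) x * F i x)) =
            G 0 x * F (Suc n) x + (\<Sum>i = 0..n. F i x * (of_nat (Suc n choose i) * G (Suc n - i) x))"
      apply (simp add: Suc_choose' algebra_simps sum.distrib)
      apply (subst (4) sum_Suc_reindex)
      apply (auto simp: algebra_simps Suc_diff_le intro: sum.cong)
      done
    have "(H n has_real_derivative (\<Sum>i = 0..n.
               of_nat (n choose i) * (F (Suc i) x * G (n-i) x + G (Suc (n-i)) x * F i x))) (at x)"
      unfolding H_def
      apply (rule DERIV_sum)
      apply (subst mult.assoc)
      apply (rule DERIV_cmult)
      apply (rule DERIV_mult'[THEN DERIV_cong])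
        apply (rule FD, rule GD)
      by (simp add: Suc_diff_le algebra_simps)
    moreover have "H (Suc n) x = G 0 x * F (Suc n) x + (\<Sum>i = 0..n. F i x * (of_nat (Suc n choose i) * G (Suc n - i) x))"
      unfolding H_def by (simp add: sum.atLeast0_atMost_Suc algebra_simps)
    ultimately show ?thesis using sumeq by simp
  qed
  ultimately show ?thesis unfolding sm_def by blast
qed

primrec Pp :: "nat \<Rightarrow> real poly" where
  "Pp 0 = 1"
| "Pp (Suc n) = [:0,0,1:] * (Pp n - pderiv (Pp n))"

definition psin :: "nat \<Rightarrow> real \<Rightarrow> real" where
  "psin n x = (if x > 0 then poly (Pp n) (1/x) * exp (-1/x) else 0)"

lemma poly_exp_lim: "((\<lambda>y. poly (p::real poly) y * exp (-y)) \<longlongrightarrow> 0) at_top"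
proof -
  have "((\<lambda>y. \<Sum>i\<le>degree p. coeff p i * (y ^ i / exp y)) \<longlongrightarrow> (\<Sum>i\<le>degree p. coeff p i * 0)) at_top"
    by (intro tendsto_sum tendsto_mult tendsto_const tendsto_power_div_exp_0)
  moreover have "poly p y * exp (-y) = (\<Sum>i\<le>degree p. coeff p i * (y ^ i / exp y))" for y
    by (simp add: poly_altdef sum_distrib_right exp_minus divide_inverse mult.assoc)
  ultimately show ?thesis by simp
qed

lemma psin_deriv: "(psin n has_real_derivative psin (Suc n) x) (at x)"
proof -
  consider "x > 0" | "x < 0" | "x = 0" by linarith
  then show ?thesis
  proof cases
    case 1
    have i1: "((\<lambda>x. 1/x) has_real_derivative -1/x^2) (at x)"
      using 1 by (auto intro!: derivative_eq_intros simp: power2_eq_square field_simps)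
    have i2: "((\<lambda>x. -1/x) has_real_derivative 1/x^2) (at x)"
      using 1 by (auto intro!: derivative_eq_intros simp: power2_eq_square field_simps)
    have d1: "((\<lambda>x. poly (Pp n) (1/x)) has_real_derivative poly (pderiv (Pp n)) (1/x) * (- 1 / x^2)) (at x)"
      by (rule DERIV_chain2[OF poly_DERIV i1])
    have d2: "((\<lambda>x. exp (-1/x)) has_real_derivative exp (-1/x) * (1/x^2)) (at x)"
      by (rule DERIV_chain2[OF DERIV_exp i2])
    have d: "((\<lambda>x. poly (Pp n) (1/x) * exp (-1/x)) has_real_derivative
         poly (pderiv (Pp n)) (1/x) * (- 1 / x^2) * exp (-1/x) + exp (-1/x) * (1/x^2) * poly (Pp n) (1/x)) (at x)"
      by (rule DERIV_mult[OF d1 d2])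
    have e: "poly (pderiv (Pp n)) (1/x) * (- 1 / x^2) * exp (-1/x) + exp (-1/x) * (1/x^2) * poly (Pp n) (1/x)
        = psin (Suc n) x"
      using 1 by (simp add: psin_def algebra_simps power2_eq_square)
    show ?thesis
      apply (rule has_field_derivative_transform_within_open[where S="{0<..}" and f="\<lambda>x. poly (Pp n) (1/x) * exp (-1/x)"])
      using d e 1 by (auto simp: psin_def)
  next
    case 2
    have "((\<lambda>x. 0) has_real_derivative psin (Suc n) x) (at x)" using 2 by (simp add: psin_def)
    then show ?thesis
      apply (rule has_field_derivative_transform_within_open[where S="{..<0}"])
      using 2 by (auto simp: psin_def)
  next
    case 3
    have r: "((\<lambda>y. (psin n y - psin n 0) / (y - 0)) \<longlongrightarrow> 0) (at_right 0)"
    proof -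
      have "((\<lambda>y. poly (pCons 0 (Pp n)) y * exp (-y)) \<longlongrightarrow> 0) at_top" by (rule poly_exp_lim)
      then have "((\<lambda>y. poly (pCons 0 (Pp n)) (inverse y) * exp (-(inverse y))) \<longlongrightarrow> 0) (at_right 0)"
        by (rule filterlim_compose) (rule filterlim_inverse_at_top_right)
      then show ?thesis
        apply (rule Lim_transform_eventually)
        unfolding eventually_at_right_field psin_def
        by (auto intro!: exI[of _ 1] simp: field_simps)
    qed
    have l: "((\<lambda>y. (psin n y - psin n 0) / (y - 0)) \<longlongrightarrow> 0) (at_left 0)"
    proof -
      have "eventually (\<lambda>y. 0 = (psin n y - psin n 0) / (y - 0)) (at_left (0::real))"
        unfolding eventually_at_left_field psin_def
        by (auto intro!: exI[of _ "-1"])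
      then show ?thesis by (rule Lim_transform_eventually[OF tendsto_const])
    qed
    have "psin (Suc n) 0 = 0" by (simp add: psin_def)
    then show ?thesis using 3 l r
      by (simp add: has_field_derivative_iff filterlim_at_split)
  qed
qed

lemma sm_psi: "sm (\<lambda>x. if x > 0 then exp (-1/x) else 0)"
  unfolding sm_def
  apply (rule exI[of _ psin])
  using psin_deriv by (auto simp: psin_def fun_eq_iff)

definition psi :: "real \<Rightarrow> real" where "psi x = (if x > 0 then exp (-1/x) else 0)"
definition kb :: "real \<Rightarrow> real" where "kb x = psi x * psi (1 - x)"
definition Kst :: "real \<Rightarrow> real" where "Kst y = integral {-1..y} kb"
definition Itot :: real where "Itot = Kst 1"

lemma sm_kb: "sm kb"
proof -
  have a: "sm psi" using sm_psi unfolding psi_def .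
  have "sm (\<lambda>x. psi ((-1) * x + 1))" by (rule sm_affine[OF a])
  then have b: "sm (\<lambda>x. psi (1 - x))" by simp
  show ?thesis unfolding kb_def[abs_def] by (rule sm_mult[OF a b])
qed

lemma kb_cont: "continuous_on S kb"
proof -
  have "isCont kb x" for x using sm_smooth(2)[OF sm_kb, of x] by (rule DERIV_isCont)
  then show ?thesis by (simp add: continuous_at_imp_continuous_on)
qed

lemma kb_nonneg: "kb x \<ge> 0" by (simp add: kb_def psi_def)
lemma kb_zero: "x \<le> 0 \<or> x \<ge> 1 \<Longrightarrow> kb x = 0" by (auto simp: kb_def psi_def)
lemma kb_pos: "0 < x \<Longrightarrow> x < 1 \<Longrightarrow> kb x > 0" by (simp add: kb_def psi_def)

lemma kb_int: "kb integrable_on {a..b}"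
  by (rule integrable_continuous_real[OF kb_cont])

lemma Kst_zero: "y \<le> 0 \<Longrightarrow> Kst y = 0"
proof -
  assume y: "y \<le> 0"
  have "integral {-1..y} kb = integral {-1..y} (\<lambda>_. 0::real)"
    by (rule integral_cong) (use y in \<open>simp add: kb_zero\<close>)
  then show ?thesis by (simp add: Kst_def)
qed

lemma Kst_one: "y \<ge> 1 \<Longrightarrow> Kst y = Itot"
proof -
  assume y: "y \<ge> 1"
  have "integral {1..y} kb = integral {1..y} (\<lambda>_. 0::real)"
    by (rule integral_cong) (use y in \<open>simp add: kb_zero\<close>)
  then have "integral {1..y} kb = 0" by simp
  moreover have "integral {-1..1} kb + integral {1..y} kb = integral {-1..y} kb"
    by (rule Henstock_Kurzweil_Integration.integral_combine) (use y kb_int in auto)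
  ultimately show ?thesis by (simp add: Kst_def Itot_def)
qed

lemma Kst_deriv: "(Kst has_real_derivative kb y) (at y)"
proof (cases "y < 0")
  case True
  have "((\<lambda>x. 0) has_real_derivative kb y) (at y)" using True by (simp add: kb_zero)
  then show ?thesis
    apply (rule has_field_derivative_transform_within_open[where S="{..<0}"])
    using True by (auto simp: Kst_zero)
next
  case False
  have c: "continuous_on {-1..y+1} kb" by (rule kb_cont)
  have "((\<lambda>x. integral {-1..x} kb) has_real_derivative kb y) (at y within {-1..y+1})"
    by (rule integral_has_real_derivative[OF c]) (use False in simp)
  moreover have "y \<in> interior {-1..y+1}" using False by simp
  ultimately show ?thesis unfolding Kst_def[abs_def] using at_within_interior by metis
qed

lemma Itot_pos: "Itot > 0"
proof -
  have ge: "Itot \<ge> 0" unfolding Itot_def Kst_def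
    by (rule integral_nonneg[OF kb_int]) (simp add: kb_nonneg)
  have "Itot \<noteq> 0"
  proof
    assume "Itot = 0"
    then have "(kb has_integral 0) (cbox (-1) 1)"
      unfolding Itot_def Kst_def using kb_int[of "-1" 1] by (simp add: has_integral_integral cbox_interval)
    then have "kb (1/2) = 0"
      apply (rule has_integral_0_cbox_imp_0[of "-1" 1 kb, rotated 2])
      apply (simp add: box_real)
      apply (simp add: cbox_interval)
      apply (rule kb_cont)
      apply (rule kb_nonneg)
      done
    with kb_pos[of "1/2"] show False by simp
  qed
  with ge show ?thesis by simp
qed

lemma Kst_bounds: "0 \<le> Kst y \<and> Kst y \<le> Itot"
proof (cases "y \<le> 0")
  case True then show ?thesis using Kst_zero Itot_pos by simp
next
  case False
  show ?thesis
  proof (cases "y \<ge> 1")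
    case True then show ?thesis using Kst_one Itot_pos by simp
  next
    case False2: False
    have "0 \<le> Kst y" unfolding Kst_def
      by (rule integral_nonneg[OF kb_int]) (simp add: kb_nonneg)
    moreover have "Kst y \<le> Itot" unfolding Kst_def Itot_def
      apply (rule integral_subset_le)
      using False False2 apply simp
        apply (rule kb_int)
       apply (rule kb_int)
      by (simp add: kb_nonneg)
    ultimately show ?thesis by simp
  qed
qed

lemma sm_Kst: "sm Kst"
  by (rule sm_antider[OF sm_kb Kst_deriv])

definition Phi :: "real \<Rightarrow> real \<Rightarrow> real \<Rightarrow> real" where
  "Phi c h x = Kst ((x - c) / h + 1) / Itot"
definition kfun :: "real \<Rightarrow> real \<Rightarrow> real \<Rightarrow> real" where
  "kfun c h x = kb ((x - c) / h + 1) / (h * Itot)"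

lemma Phi_deriv:
  assumes "h > 0"
  shows "(Phi c h has_real_derivative kfun c h x) (at x)"
proof -
  have d: "((\<lambda>x. (x - c) / h + 1) has_real_derivative 1 / h) (at x)"
    using assms by (auto intro!: derivative_eq_intros)
  have "((\<lambda>x. Kst ((x - c) / h + 1)) has_real_derivative kb ((x - c) / h + 1) * (1 / h)) (at x)"
    by (rule DERIV_chain2[OF Kst_deriv d])
  then have "((\<lambda>x. Kst ((x - c) / h + 1) / Itot) has_real_derivative kb ((x - c) / h + 1) * (1 / h) / Itot) (at x)"
    by (rule DERIV_cdivide)
  then show ?thesis unfolding Phi_def[abs_def] kfun_def by simp
qed

lemma sm_Phi: "sm (Phi c h)"
proof -
  have "sm (\<lambda>x. Kst ((1/h) * x + (1 - c/h)))" by (rule sm_affine[OF sm_Kst])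
  then have "sm (\<lambda>x. (1/Itot) * Kst ((1/h) * x + (1 - c/h)) + 0 * Kst x)"
    by (rule sm_lin[OF _ sm_Kst])
  moreover have "(\<lambda>x. (1/Itot) * Kst ((1/h) * x + (1 - c/h)) + 0 * Kst x) = Phi c h"
  proof -
    have e: "(1/h) * x + (1 - c/h) = (x - c)/h + 1" for x by (simp add: diff_divide_distrib)
    show ?thesis unfolding fun_eq_iff Phi_def e by simp
  qed
  ultimately show ?thesis by simp
qed

lemma Phi_zero: "h > 0 \<Longrightarrow> x \<le> c - h \<Longrightarrow> Phi c h x = 0"
proof -
  assume h: "h > 0" and x: "x \<le> c - h"
  have "(x - c) / h + 1 \<le> 0"
  proof -
    have "(x - c) / h \<le> -1" using h x by (simp add: divide_le_eq)
    then show ?thesis by simp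
  qed
  then show ?thesis by (simp add: Phi_def Kst_zero)
qed

lemma Phi_one: "h > 0 \<Longrightarrow> x \<ge> c \<Longrightarrow> Phi c h x = 1"
proof -
  assume h: "h > 0" and x: "x \<ge> c"
  have "(x - c) / h + 1 \<ge> 1" using h x by simp
  then show ?thesis using Itot_pos by (simp add: Phi_def Kst_one)
qed

lemma Phi_bounds: "0 \<le> Phi c h x \<and> Phi c h x \<le> 1"
  using Kst_bounds[of "(x - c) / h + 1"] Itot_pos by (simp add: Phi_def divide_le_eq)

lemma kfun_nonneg: "h > 0 \<Longrightarrow> kfun c h x \<ge> 0"
  using Itot_pos kb_nonneg by (simp add: kfun_def)

lemma kfun_zero: "h > 0 \<Longrightarrow> x \<le> c - h \<or> x \<ge> c \<Longrightarrow> kfun c h x = 0"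
proof -
  assume h: "h > 0" and x: "x \<le> c - h \<or> x \<ge> c"
  have "(x - c) / h + 1 \<le> 0 \<or> (x - c) / h + 1 \<ge> 1"
  proof (cases "x \<le> c - h")
    case True
    have "(x - c) / h \<le> -1" using h True by (simp add: divide_le_eq)
    then show ?thesis by simp
  next
    case False
    then have "x \<ge> c" using x by simp
    then show ?thesis using h by simp
  qed
  then show ?thesis by (simp add: kfun_def kb_zero)
qed

lemma kfun_cont: "h > 0 \<Longrightarrow> continuous_on S (kfun c h)"
proof -
  assume h: "h > 0"
  have "continuous_on S (\<lambda>x. kb ((x - c) / h + 1))"
    by (rule continuous_on_compose2[OF kb_cont[of UNIV]]) (use h in \<open>auto intro!: continuous_intros\<close>)
  then show ?thesis unfolding kfun_def[abs_def] using h Itot_pos by (intro continuous_intros) auto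
qed

lemma kfun_integral:
  assumes "h > 0" "a \<le> c - h" "c \<le> b"
  shows "(kfun c h has_integral 1) {a..b}"
proof -
  have "(kfun c h has_integral (Phi c h b - Phi c h a)) {a..b}"
    apply (rule fundamental_theorem_of_calculus)
    using assms apply simp
    using Phi_deriv[OF assms(1)] by (simp add: has_real_derivative_iff_has_vector_derivative[symmetric] has_field_derivative_at_within)
  then show ?thesis using assms Phi_zero Phi_one by simp
qed

definition tphi :: "real \<Rightarrow> real \<Rightarrow> real \<Rightarrow> real \<Rightarrow> real" where
  "tphi s t h x = Phi s h x - Phi (t + h) h x"

lemma tphi_test:
  assumes "h > 0" "0 < s - h" "s < t" "t + h < xm"
  shows "test_fun xm (tphi s t h)"
    and "deriv (tphi s t h) x = kfun s h x - kfun (t + h) h x"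
    and "\<bar>tphi s t h x\<bar> \<le> 1"
    and "x \<in> {s..t} \<Longrightarrow> tphi s t h x = 1"
    and "x < s - h \<or> x > t + h \<Longrightarrow> tphi s t h x = 0"
    and "continuous_on S (tphi s t h)"
proof -
  have sm: "sm (tphi s t h)"
  proof -
    have "sm (\<lambda>x. 1 * Phi s h x + (-1) * Phi (t + h) h x)" by (rule sm_lin[OF sm_Phi sm_Phi])
    then show ?thesis by (simp add: tphi_def[abs_def])
  qed
  have D: "(tphi s t h has_real_derivative kfun s h x - kfun (t + h) h x) (at x)" for x
    unfolding tphi_def[abs_def] by (intro DERIV_diff Phi_deriv assms(1))
  show "deriv (tphi s t h) x = kfun s h x - kfun (t + h) h x"
    by (rule DERIV_imp_deriv[OF D])
  show "\<bar>tphi s t h x\<bar> \<le> 1"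
    using Phi_bounds[of s h x] Phi_bounds[of "t+h" h x] by (auto simp: tphi_def abs_le_iff)
  show "x \<in> {s..t} \<Longrightarrow> tphi s t h x = 1"
    using assms by (simp add: tphi_def Phi_one Phi_zero)
  show z: "tphi s t h x = 0" if "x < s - h \<or> x > t + h" for x
  proof (cases "x < s - h")
    case True
    then show ?thesis using assms by (simp add: tphi_def Phi_zero)
  next
    case False
    then have "x > t + h" using that by simp
    then show ?thesis using assms by (simp add: tphi_def Phi_one)
  qed
  show "test_fun xm (tphi s t h)"
    unfolding test_fun_def
    apply (intro conjI sm_smooth(1)[OF sm])
    apply (rule exI[of _ "s - h"], rule exI[of _ "t + h"])
    using assms z by auto
  show "continuous_on S (tphi s t h)"
    using D DERIV_isCont continuous_at_imp_continuous_on by blast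
qed

lemma avg_bound:
  fixes w :: "real \<Rightarrow> real"
  assumes h: "h > 0" and ab: "a \<le> c - h" "c \<le> b" and wc: "continuous_on {a..b} w"
    and close: "\<And>x. x \<in> {c-h..c} \<Longrightarrow> \<bar>w x - w p\<bar> \<le> e"
  shows "\<bar>integral {a..b} (\<lambda>x. w x * kfun c h x) - w p\<bar> \<le> e"
proof -
  have ki: "(kfun c h has_integral 1) {a..b}" by (rule kfun_integral[OF h ab])
  have kc: "continuous_on {a..b} (kfun c h)" by (rule kfun_cont[OF h])
  have i1: "(\<lambda>x. w x * kfun c h x) integrable_on {a..b}"
    by (intro integrable_continuous_real continuous_intros wc kc)
  have i2: "(\<lambda>x. (w x - w p) * kfun c h x) integrable_on {a..b}"
    by (intro integrable_continuous_real continuous_intros wc kc)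
  have i3: "(\<lambda>x. e * kfun c h x) integrable_on {a..b}"
    by (intro integrable_continuous_real continuous_intros kc)
  have "integral {a..b} (\<lambda>x. (w x - w p) * kfun c h x)
      = integral {a..b} (\<lambda>x. w x * kfun c h x) - integral {a..b} (\<lambda>x. w p * kfun c h x)"
  proof -
    have i4: "(\<lambda>x. w p * kfun c h x) integrable_on {a..b}"
      by (intro integrable_continuous_real continuous_intros kc)
    show ?thesis
      by (subst integral_diff[OF i1 i4, symmetric]) (simp add: left_diff_distrib)
  qed
  also have "integral {a..b} (\<lambda>x. w p * kfun c h x) = w p"
    using ki by (simp add: integral_unique)
  finally have eq: "integral {a..b} (\<lambda>x. w x * kfun c h x) - w p = integral {a..b} (\<lambda>x. (w x - w p) * kfun c h x)"
    by simp
  have "norm (integral {a..b} (\<lambda>x. (w x - w p) * kfun c h x)) \<le> integral {a..b} (\<lambda>x. e * kfun c h x)"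
  proof (rule integral_norm_bound_integral[OF i2 i3])
    fix x assume "x \<in> {a..b}"
    show "norm ((w x - w p) * kfun c h x) \<le> e * kfun c h x"
    proof (cases "x \<in> {c-h..c}")
      case True
      then show ?thesis using close[OF True] kfun_nonneg[OF h, of c x]
        by (simp add: abs_mult mult_right_mono)
    next
      case False
      then have "x \<le> c - h \<or> x \<ge> c" by auto
      then show ?thesis using kfun_zero[OF h] by simp
    qed
  qed
  also have "integral {a..b} (\<lambda>x. e * kfun c h x) = e"
    using ki by (simp add: integral_unique)
  finally show ?thesis using eq by simp
qed

lemma step1:
  fixes v g w :: "real \<Rightarrow> real" and xm s t :: real
  assumes wd: "weak_deriv xm v g"
    and vm: "set_borel_measurable lborel (Omega xm) v"
    and ae: "AE x in lborel. x \<in> Omega xm \<longrightarrow> w x = v x"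
    and wc: "continuous_on (Omega xm) w"
    and gi: "\<And>a b. 0 < a \<Longrightarrow> b < xm \<Longrightarrow> set_integrable lborel {a..b} g"
    and st: "0 < s" "s < t" "t < xm"
  shows "w t - w s = (LINT x:{s..t}|lborel. g x)"
proof -
  define h0 where "h0 = min s (xm - t) / 2"
  have h0: "0 < h0" "h0 < s" "t + h0 < xm" using st unfolding h0_def min_def by (auto simp: field_simps)
  define hn where "hn n = h0 / real (Suc n)" for n
  have hnpos: "0 < hn n" for n using h0 by (simp add: hn_def)
  have hnle: "hn n \<le> h0" for n using h0 by (simp add: hn_def divide_le_eq)
  have hn0: "hn \<longlonglongrightarrow> 0"
  proof -
    have "(\<lambda>n. h0 * inverse (real (Suc n))) \<longlonglongrightarrow> h0 * 0"
      by (intro tendsto_mult tendsto_const LIMSEQ_inverse_real_of_nat)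
    then show ?thesis by (simp add: hn_def[abs_def] divide_inverse)
  qed
  define J where "J = {s - h0 .. t + h0}"
  have JO: "J \<subseteq> Omega xm" using h0 by (auto simp: J_def Omega_def)
  define ph where "ph n = tphi s t (hn n)" for n
  have pa: "hn n > 0" "0 < s - hn n" "s < t" "t + hn n < xm" for n
    using hnpos[of n] hnle[of n] h0 st by auto
  note T = tphi_test[OF pa, folded ph_def]
  have weak: "(LINT x:Omega xm|lborel. v x * deriv (ph n) x) = - (LINT x:Omega xm|lborel. g x * ph n x)" for n
    using wd T(1) unfolding weak_deriv_def by blast
  have phz: "ph n x = 0" if "x \<notin> J" for n x
    using that hnle[of n] by (intro T(5)) (auto simp: J_def)
  have phc: "continuous_on UNIV (ph n)" for n by (rule T(6))
  have R: "(\<lambda>n. LINT x:Omega xm|lborel. g x * ph n x) \<longlonglongrightarrow> (LINT x:{s..t}|lborel. g x)"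
  proof -
    have gJ: "set_integrable lborel J g" unfolding J_def using h0 by (intro gi) auto
    have gst: "set_integrable lborel {s..t} g" using st by (intro gi) auto
    have eqR: "(LINT x:Omega xm|lborel. g x * ph n x) = (LINT x|lborel. (indicator J x * g x) * ph n x)" for n
      unfolding set_lebesgue_integral_def
    proof (rule Bochner_Integration.integral_cong[OF refl])
      fix x
      show "indicator (Omega xm) x *\<^sub>R (g x * ph n x) = indicator J x * g x * ph n x"
        using JO phz[of x n] by (cases "x \<in> J") (auto simp: indicator_def)
    qed
    have eqT: "(LINT x:{s..t}|lborel. g x) = (LINT x|lborel. indicator {s..t} x * g x)"
      unfolding set_lebesgue_integral_def by simp
    have "(\<lambda>n. LINT x|lborel. (indicator J x * g x) * ph n x) \<longlonglongrightarrow> (LINT x|lborel. indicator {s..t} x * g x)"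
    proof (rule integral_dominated_convergence[where w="\<lambda>x. \<bar>indicator J x * g x\<bar>"])
      show "(\<lambda>x. indicator {s..t} x * g x) \<in> borel_measurable lborel"
        using borel_measurable_integrable[OF gst[unfolded set_integrable_def]] by simp
      have mJ: "(\<lambda>x. indicator J x * g x) \<in> borel_measurable lborel"
        using borel_measurable_integrable[OF gJ[unfolded set_integrable_def]] by simp
      show "(\<lambda>x. (indicator J x * g x) * ph n x) \<in> borel_measurable lborel" for n
        using mJ borel_measurable_continuous_onI[OF phc[of n]] by measurable
      show "integrable lborel (\<lambda>x. \<bar>indicator J x * g x\<bar>)"
        using gJ[unfolded set_integrable_def] by (simp add: integrable_abs)
      show "AE x in lborel. norm ((indicator J x * g x) * ph n x) \<le> \<bar>indicator J x * g x\<bar>" for n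
        using T(3)[of n] by (auto simp: abs_mult intro!: mult_left_le)
      show "AE x in lborel. (\<lambda>n. (indicator J x * g x) * ph n x) \<longlonglongrightarrow> indicator {s..t} x * g x"
      proof (rule AE_I2)
        fix x
        consider "x \<in> {s..t}" | "x < s" | "x > t" by force
        then show "(\<lambda>n. (indicator J x * g x) * ph n x) \<longlonglongrightarrow> indicator {s..t} x * g x"
        proof cases
          case 1
          then have "x \<in> J" using h0 by (auto simp: J_def)
          then show ?thesis using 1 T(4) by (simp add: indicator_def)
        next
          case 2
          have "eventually (\<lambda>n. hn n < s - x) sequentially"
            using order_tendstoD(2)[OF hn0, of "s - x"] 2 by simp
          then have "eventually (\<lambda>n. (indicator J x * g x) * ph n x = indicator {s..t} x * g x) sequentially"
            by eventually_elim (use 2 T(5) in auto)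
          then show ?thesis by (rule tendsto_eventually)
        next
          case 3
          have "eventually (\<lambda>n. hn n < x - t) sequentially"
            using order_tendstoD(2)[OF hn0, of "x - t"] 3 by simp
          then have "eventually (\<lambda>n. (indicator J x * g x) * ph n x = indicator {s..t} x * g x) sequentially"
            by eventually_elim (use 3 T(5) in auto)
          then show ?thesis by (rule tendsto_eventually)
        qed
      qed
    qed
    then show ?thesis unfolding eqR eqT .
  qed
  have Leq: "(LINT x:Omega xm|lborel. v x * deriv (ph n) x)
      = integral J (\<lambda>x. w x * kfun s (hn n) x) - integral J (\<lambda>x. w x * kfun (t + hn n) (hn n) x)" for n
  proof -
    define D where "D x = kfun s (hn n) x - kfun (t + hn n) (hn n) x" for x
    have dD: "deriv (ph n) x = D x" for x unfolding D_def by (rule T(2))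
    have Dc: "continuous_on S D" for S unfolding D_def[abs_def]
      by (intro continuous_intros kfun_cont hnpos)
    have DJ: "D x = 0" if "x \<notin> J" for x
    proof -
      have "x < s - h0 \<or> x > t + h0" using that by (auto simp: J_def)
      then show ?thesis unfolding D_def using hnle[of n] hnpos[of n] st h0
        by (subst (1 2) kfun_zero) auto
    qed
    have wJ: "continuous_on J w" by (rule continuous_on_subset[OF wc JO])
    have "(LINT x:Omega xm|lborel. v x * deriv (ph n) x) = (LINT x|lborel. indicator (Omega xm) x *\<^sub>R v x * D x)"
      unfolding set_lebesgue_integral_def dD by (simp add: mult.assoc)
    also have "\<dots> = (LINT x|lborel. indicator (Omega xm) x *\<^sub>R w x * D x)"
    proof (rule integral_cong_AE)
      show "(\<lambda>x. indicator (Omega xm) x *\<^sub>R v x * D x) \<in> borel_measurable lborel"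
        using vm[unfolded set_borel_measurable_def] borel_measurable_continuous_onI[OF Dc[of UNIV]]
        by measurable
      have "(\<lambda>x. indicator (Omega xm) x *\<^sub>R w x) \<in> borel_measurable borel"
        by (rule borel_measurable_continuous_on_indicator[OF _ wc]) (simp add: Omega_def)
      then show "(\<lambda>x. indicator (Omega xm) x *\<^sub>R w x * D x) \<in> borel_measurable lborel"
        using borel_measurable_continuous_onI[OF Dc[of UNIV]] by measurable
      show "AE x in lborel. indicator (Omega xm) x *\<^sub>R v x * D x = indicator (Omega xm) x *\<^sub>R w x * D x"
        using ae by eventually_elim (auto simp: indicator_def)
    qed
    also have "\<dots> = (LINT x|lborel. indicator J x *\<^sub>R (w x * D x))"
      by (rule Bochner_Integration.integral_cong[OF refl]) (use JO DJ in \<open>auto simp: indicator_def\<close>)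
    also have "\<dots> = integral J (\<lambda>x. w x * D x)"
    proof -
      have "set_integrable lborel J (\<lambda>x. w x * D x)"
        unfolding J_def by (rule borel_integrable_atLeastAtMost') (use wJ Dc in \<open>auto simp: J_def intro!: continuous_intros\<close>)
      then show ?thesis using set_borel_integral_eq_integral(2) unfolding set_lebesgue_integral_def by metis
    qed
    also have "\<dots> = integral J (\<lambda>x. w x * kfun s (hn n) x) - integral J (\<lambda>x. w x * kfun (t + hn n) (hn n) x)"
    proof -
      have i1: "(\<lambda>x. w x * kfun s (hn n) x) integrable_on J" unfolding J_def
        by (rule integrable_continuous_real) (use wJ in \<open>auto simp: J_def intro!: continuous_intros kfun_cont hnpos\<close>)
      have i2: "(\<lambda>x. w x * kfun (t + hn n) (hn n) x) integrable_on J" unfolding J_def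
        by (rule integrable_continuous_real) (use wJ in \<open>auto simp: J_def intro!: continuous_intros kfun_cont hnpos\<close>)
      show ?thesis unfolding D_def by (subst integral_diff[OF i1 i2, symmetric]) (simp add: right_diff_distrib)
    qed
    finally show ?thesis .
  qed
  have L: "(\<lambda>n. LINT x:Omega xm|lborel. v x * deriv (ph n) x) \<longlonglongrightarrow> w s - w t"
  proof (rule LIMSEQ_I)
    fix r :: real assume r: "r > 0"
    define e where "e = r / 3"
    have e: "e > 0" using r by (simp add: e_def)
    have sO: "s \<in> Omega xm" "t \<in> Omega xm" using st by (auto simp: Omega_def)
    obtain d1 where d1: "d1 > 0" "\<And>x. x \<in> Omega xm \<Longrightarrow> dist x s < d1 \<Longrightarrow> dist (w x) (w s) < e"
      using wc sO(1) e unfolding continuous_on_iff by meson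
    obtain d2 where d2: "d2 > 0" "\<And>x. x \<in> Omega xm \<Longrightarrow> dist x t < d2 \<Longrightarrow> dist (w x) (w t) < e"
      using wc sO(2) e unfolding continuous_on_iff by meson
    have "eventually (\<lambda>n. hn n < min d1 d2) sequentially"
      using order_tendstoD(2)[OF hn0, of "min d1 d2"] d1 d2 by simp
    then obtain N where N: "\<And>n. n \<ge> N \<Longrightarrow> hn n < min d1 d2"
      unfolding eventually_sequentially by blast
    show "\<exists>no. \<forall>n\<ge>no. norm ((LINT x:Omega xm|lborel. v x * deriv (ph n) x) - (w s - w t)) < r"
    proof (intro exI allI impI)
      fix n assume n: "n \<ge> N"
      have wJ: "continuous_on {s - h0..t + h0} w" using continuous_on_subset[OF wc JO] by (simp add: J_def)
      have b1: "\<bar>integral J (\<lambda>x. w x * kfun s (hn n) x) - w s\<bar> \<le> e"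
        unfolding J_def
      proof (rule avg_bound[OF hnpos _ _ wJ])
        show "s - h0 \<le> s - hn n" using hnle[of n] by simp
        show "s \<le> t + h0" using st h0 by simp
        fix x assume x: "x \<in> {s - hn n..s}"
        have "x \<in> Omega xm" using x pa(2)[of n] pa(4)[of n] st by (auto simp: Omega_def)
        moreover have "dist x s < d1" using x N[OF n] by (auto simp: dist_real_def)
        ultimately have "dist (w x) (w s) < e" by (rule d1(2))
        then show "\<bar>w x - w s\<bar> \<le> e" by (simp add: dist_real_def)
      qed
      have b2: "\<bar>integral J (\<lambda>x. w x * kfun (t + hn n) (hn n) x) - w t\<bar> \<le> e"
        unfolding J_def
      proof (rule avg_bound[OF hnpos _ _ wJ])
        show "s - h0 \<le> t + hn n - hn n" using st h0 by simp
        show "t + hn n \<le> t + h0" using hnle[of n] by simp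
        fix x assume x: "x \<in> {t + hn n - hn n..t + hn n}"
        have "x \<in> Omega xm" using x pa(2)[of n] pa(4)[of n] st by (auto simp: Omega_def)
        moreover have "dist x t < d2" using x N[OF n] by (auto simp: dist_real_def)
        ultimately have "dist (w x) (w t) < e" by (rule d2(2))
        then show "\<bar>w x - w t\<bar> \<le> e" by (simp add: dist_real_def)
      qed
      show "norm ((LINT x:Omega xm|lborel. v x * deriv (ph n) x) - (w s - w t)) < r"
        using b1 b2 r unfolding Leq real_norm_def e_def abs_le_iff abs_less_iff by linarith
    qed
  qed
  have "(\<lambda>n. LINT x:Omega xm|lborel. v x * deriv (ph n) x) \<longlonglongrightarrow> - (LINT x:{s..t}|lborel. g x)"
    unfolding weak by (rule tendsto_minus[OF R])
  with L have "w s - w t = - (LINT x:{s..t}|lborel. g x)" by (rule LIMSEQ_unique)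
  then show ?thesis by simp
qed

lemma GL:
  fixes f g :: "real \<Rightarrow> real"
  assumes fi: "set_integrable lborel {a..b} f" and gi: "set_integrable lborel {a..b} g"
  shows "set_integrable lborel {a..b} (\<lambda>x. f x * (LINT y:{a..x}|lborel. g y))"
    and "set_integrable lborel {a..b} (\<lambda>x. (LINT y:{a..x}|lborel. f y) * g x)"
    and "(LINT x:{a..b}|lborel. f x * (LINT y:{a..x}|lborel. g y)) + (LINT x:{a..b}|lborel. (LINT y:{a..x}|lborel. f y) * g x)
         = (LINT x:{a..b}|lborel. f x) * (LINT y:{a..b}|lborel. g y)"
proof -
  define A where "A = {a..b}"
  define F where "F x = indicator A x * f x" for x
  define G where "G x = indicator A x * g x" for x
  have Fi: "integrable lborel F" using fi unfolding set_integrable_def F_def A_def by simp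
  have Gi: "integrable lborel G" using gi unfolding set_integrable_def G_def A_def by simp
  have Fm[measurable]: "F \<in> borel_measurable lborel" using Fi by (rule borel_measurable_integrable)
  have Gm[measurable]: "G \<in> borel_measurable lborel" using Gi by (rule borel_measurable_integrable)
  define H where "H x y = F x * G y" for x y
  have Hm[measurable]: "(\<lambda>(x,y). H x y) \<in> borel_measurable (lborel \<Otimes>\<^sub>M lborel)"
    unfolding H_def by measurable
  have Hi: "integrable (lborel \<Otimes>\<^sub>M lborel) (\<lambda>(x,y). H x y)"
  proof (rule lborel_pair.Fubini_integrable[OF Hm])
    have "integrable lborel (\<lambda>x. \<bar>F x\<bar> * (\<integral>y. \<bar>G y\<bar> \<partial>lborel))"
      using Fi by (intro integrable_mult_left integrable_abs)
    then show "integrable lborel (\<lambda>x. \<integral>y. norm (case (x, y) of (x, y) \<Rightarrow> H x y) \<partial>lborel)"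
      by (simp add: H_def abs_mult)
    show "AE x in lborel. integrable lborel (\<lambda>y. case (x, y) of (x, y) \<Rightarrow> H x y)"
      using Gi by (simp add: H_def)
  qed
  define H1 where "H1 x y = (if y \<le> x then H x y else 0)" for x y
  define H2 where "H2 x y = (if x < y then H x y else 0)" for x y
  have H1m[measurable]: "(\<lambda>(x,y). H1 x y) \<in> borel_measurable (lborel \<Otimes>\<^sub>M lborel)"
    unfolding H1_def by measurable
  have H2m[measurable]: "(\<lambda>(x,y). H2 x y) \<in> borel_measurable (lborel \<Otimes>\<^sub>M lborel)"
    unfolding H2_def by measurable
  have H1i: "integrable (lborel \<Otimes>\<^sub>M lborel) (\<lambda>(x,y). H1 x y)"
    by (rule Bochner_Integration.integrable_bound[OF Hi H1m]) (auto simp: H1_def split: prod.splits)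
  have H2i: "integrable (lborel \<Otimes>\<^sub>M lborel) (\<lambda>(x,y). H2 x y)"
    by (rule Bochner_Integration.integrable_bound[OF Hi H2m]) (auto simp: H2_def split: prod.splits)
  define Gint where "Gint x = (LINT y:{a..x}|lborel. g y)" for x
  define Fint where "Fint x = (LINT y:{a..x}|lborel. f y)" for x
  have in1: "(\<integral>y. H1 x y \<partial>lborel) = indicator A x *\<^sub>R (f x * Gint x)" for x
  proof (cases "x \<in> A")
    case True
    have "H1 x y = f x * (indicator {a..x} y *\<^sub>R g y)" for y
      using True by (auto simp: H1_def H_def F_def G_def A_def indicator_def)
    then show ?thesis using True by (simp add: Gint_def set_lebesgue_integral_def)
  next
    case False
    then have "H1 x y = 0" for y by (simp add: H1_def H_def F_def)
    then show ?thesis using False by simp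
  qed
  have in2: "(\<integral>x. H2 x y \<partial>lborel) = indicator A y *\<^sub>R (Fint y * g y)" for y
  proof (cases "y \<in> A")
    case True
    have "H2 x y = (indicator {..<y} x * F x) * G y" for x
      by (auto simp: H2_def H_def indicator_def)
    then have "(\<integral>x. H2 x y \<partial>lborel) = (\<integral>x. indicator {..<y} x * F x \<partial>lborel) * G y"
      by simp
    also have "(\<integral>x. indicator {..<y} x * F x \<partial>lborel) = (\<integral>x. indicator {..y} x * F x \<partial>lborel)"
      by (rule integral_cong_AE) (use AE_lborel_singleton[of y] in \<open>auto elim!: eventually_mono simp: indicator_def\<close>)
    also have "(\<integral>x. indicator {..y} x * F x \<partial>lborel) = Fint y"
      unfolding Fint_def set_lebesgue_integral_def
      by (rule Bochner_Integration.integral_cong[OF refl]) (use True in \<open>auto simp: F_def A_def indicator_def\<close>)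
    finally show ?thesis using True by (simp add: G_def)
  next
    case False
    then have "H2 x y = 0" for x by (simp add: H2_def H_def G_def)
    then show ?thesis using False by simp
  qed
  have I1: "integrable lborel (\<lambda>x. indicator A x *\<^sub>R (f x * Gint x))"
    using lborel_pair.integrable_fst[OF H1i] by (simp add: in1)
  have I2: "integrable lborel (\<lambda>y. indicator A y *\<^sub>R (Fint y * g y))"
    using lborel_pair.integrable_snd[OF H2i] by (simp add: in2)
  show "set_integrable lborel {a..b} (\<lambda>x. f x * (LINT y:{a..x}|lborel. g y))"
    using I1 unfolding set_integrable_def A_def Gint_def .
  show "set_integrable lborel {a..b} (\<lambda>x. (LINT y:{a..x}|lborel. f y) * g x)"
    using I2 unfolding set_integrable_def A_def Fint_def .
  have e0: "integral\<^sup>L (lborel \<Otimes>\<^sub>M lborel) (\<lambda>(x,y). H x y) = (\<integral>x. F x \<partial>lborel) * (\<integral>y. G y \<partial>lborel)"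
    using lborel_pair.integral_fst[OF Hi] by (simp add: H_def)
  have e1: "integral\<^sup>L (lborel \<Otimes>\<^sub>M lborel) (\<lambda>(x,y). H1 x y) = (LINT x:A|lborel. f x * Gint x)"
    using lborel_pair.integral_fst[OF H1i] by (simp add: in1 set_lebesgue_integral_def)
  have e2: "integral\<^sup>L (lborel \<Otimes>\<^sub>M lborel) (\<lambda>(x,y). H2 x y) = (LINT y:A|lborel. Fint y * g y)"
    using lborel_pair.integral_snd[OF H2i] by (simp add: in2 set_lebesgue_integral_def)
  have "integral\<^sup>L (lborel \<Otimes>\<^sub>M lborel) (\<lambda>(x,y). H x y)
      = integral\<^sup>L (lborel \<Otimes>\<^sub>M lborel) (\<lambda>(x,y). H1 x y) + integral\<^sup>L (lborel \<Otimes>\<^sub>M lborel) (\<lambda>(x,y). H2 x y)"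
  proof -
    have "(\<lambda>(x,y). H x y) = (\<lambda>p. (\<lambda>(x,y). H1 x y) p + (\<lambda>(x,y). H2 x y) p)"
      by (auto simp: H1_def H2_def fun_eq_iff)
    then show ?thesis using Bochner_Integration.integral_add[OF H1i H2i] by simp
  qed
  then show "(LINT x:{a..b}|lborel. f x * (LINT y:{a..x}|lborel. g y)) + (LINT x:{a..b}|lborel. (LINT y:{a..x}|lborel. f y) * g x)
         = (LINT x:{a..b}|lborel. f x) * (LINT y:{a..b}|lborel. g y)"
    using e0 e1 e2 unfolding A_def Gint_def Fint_def F_def G_def set_lebesgue_integral_def by simp
qed

lemma int_cont_mult:
  fixes u g :: "real \<Rightarrow> real"
  assumes uc: "continuous_on {a..b} u" and gi: "set_integrable lborel {a..b} g"
  shows "set_integrable lborel {a..b} (\<lambda>x. u x * g x)"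
proof -
  have "compact (u ` {a..b})" by (rule compact_continuous_image[OF uc compact_Icc])
  then obtain B where B: "\<And>x. x \<in> {a..b} \<Longrightarrow> \<bar>u x\<bar> \<le> B"
    using compact_imp_bounded bounded_real by (metis image_eqI)
  have gI: "integrable lborel (\<lambda>x. indicator {a..b} x * g x)" using gi by (simp add: set_integrable_def)
  have m1: "(\<lambda>x. indicator {a..b} x *\<^sub>R u x) \<in> borel_measurable borel"
    by (rule borel_measurable_continuous_on_indicator[OF _ uc]) simp
  have m2: "(\<lambda>x. indicator {a..b} x * g x) \<in> borel_measurable lborel"
    by (rule borel_measurable_integrable[OF gI])
  have m: "(\<lambda>x. indicator {a..b} x * (u x * g x)) \<in> borel_measurable lborel"
  proof -
    have "(\<lambda>x. (indicator {a..b} x *\<^sub>R u x) * (indicator {a..b} x * g x)) \<in> borel_measurable lborel"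
      using m1 m2 by measurable
    moreover have "(\<lambda>x. (indicator {a..b} x *\<^sub>R u x) * (indicator {a..b} x * g x)) = (\<lambda>x. indicator {a..b} x * (u x * g x))"
      by (auto simp: fun_eq_iff indicator_def)
    ultimately show ?thesis by simp
  qed
  have "integrable lborel (\<lambda>x. indicator {a..b} x * (u x * g x))"
  proof (rule Bochner_Integration.integrable_bound[OF integrable_mult_right[OF gI, of B] m])
    show "AE x in lborel. norm (indicator {a..b} x * (u x * g x)) \<le> norm (B * (indicator {a..b} x * g x))"
    proof (rule AE_I2)
      fix x show "norm (indicator {a..b} x * (u x * g x)) \<le> norm (B * (indicator {a..b} x * g x))"
        using B[of x] by (cases "x \<in> {a..b}") (auto simp: abs_mult intro!: mult_right_mono)
    qed
  qed
  then show ?thesis by (simp add: set_integrable_def)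
qed

lemma set_int_sub:
  fixes f :: "real \<Rightarrow> real"
  assumes "set_integrable lborel {a..b} f" "a \<le> c" "d \<le> b"
  shows "set_integrable lborel {c..d} f"
  by (rule set_integrable_subset[OF assms(1)]) (use assms in auto)

lemma ibp_sq:
  fixes w g :: "real \<Rightarrow> real"
  assumes cw: "continuous_on {a..c} w" and gi: "set_integrable lborel {a..c} g"
    and rep: "\<And>x. x \<in> {a..c} \<Longrightarrow> w x - w a = (LINT y:{a..x}|lborel. g y)"
    and ac: "a \<le> c"
  shows "(LINT x:{a..c}|lborel. w x * g x) = ((w c)^2 - (w a)^2) / 2"
proof -
  note GLr = GL[OF gi gi]
  have e1: "(LINT x:{a..c}|lborel. g x * (LINT y:{a..x}|lborel. g y)) = (LINT x:{a..c}|lborel. (w x - w a) * g x)"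
    by (rule set_lebesgue_integral_cong) (auto simp: rep mult.commute)
  have e2: "(LINT x:{a..c}|lborel. (LINT y:{a..x}|lborel. g y) * g x) = (LINT x:{a..c}|lborel. (w x - w a) * g x)"
    by (rule set_lebesgue_integral_cong) (auto simp: rep)
  have wgi: "set_integrable lborel {a..c} (\<lambda>x. w x * g x)" by (rule int_cont_mult[OF cw gi])
  have e3: "(LINT x:{a..c}|lborel. (w x - w a) * g x) = (LINT x:{a..c}|lborel. w x * g x) - w a * (LINT x:{a..c}|lborel. g x)"
  proof -
    have "(LINT x:{a..c}|lborel. (w x - w a) * g x) = (LINT x:{a..c}|lborel. w x * g x - w a * g x)"
      by (simp add: left_diff_distrib)
    also have "\<dots> = (LINT x:{a..c}|lborel. w x * g x) - (LINT x:{a..c}|lborel. w a * g x)"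
      by (rule set_integral_diff(2)[OF wgi]) (use gi in auto)
    finally show ?thesis by simp
  qed
  have gc: "(LINT y:{a..c}|lborel. g y) = w c - w a" using rep[of c] ac by simp
  have "2 * ((LINT x:{a..c}|lborel. w x * g x) - w a * (w c - w a)) = (w c - w a) * (w c - w a)"
    using GLr(3) e1 e2 e3 gc by simp
  then show ?thesis by (simp add: algebra_simps power2_eq_square)
qed

lemma ibp_x:
  fixes w g :: "real \<Rightarrow> real"
  assumes cw: "continuous_on {a..b} w" and gi: "set_integrable lborel {a..b} g"
    and rep: "\<And>x. x \<in> {a..b} \<Longrightarrow> w x - w a = (LINT y:{a..x}|lborel. g y)"
    and ab: "a \<le> b"
  shows "(LINT x:{a..b}|lborel. x * w x * g x) = (b * (w b)^2 - a * (w a)^2) / 2 - (LINT x:{a..b}|lborel. (w x)^2) / 2"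
proof -
  define f where "f x = w x * g x" for x
  have fi: "set_integrable lborel {a..b} f" unfolding f_def by (rule int_cont_mult[OF cw gi])
  have oi: "set_integrable lborel {a..b} (\<lambda>_. 1::real)"
    by (rule borel_integrable_atLeastAtMost') simp
  note GLr = GL[OF fi oi]
  have one: "(LINT y:{a..x}|lborel. (1::real)) = x - a" if "a \<le> x" for x
    using that by (simp add: set_integral_const)
  have fint: "(LINT y:{a..x}|lborel. f y) = ((w x)^2 - (w a)^2) / 2" if "x \<in> {a..b}" for x
    unfolding f_def
  proof (rule ibp_sq)
    show "continuous_on {a..x} w" using that by (intro continuous_on_subset[OF cw]) auto
    show "set_integrable lborel {a..x} g" using that by (intro set_int_sub[OF gi]) auto
    show "\<And>y. y \<in> {a..x} \<Longrightarrow> w y - w a = (LINT y:{a..y}|lborel. g y)" using rep that by auto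
    show "a \<le> x" using that by simp
  qed
  have e1: "(LINT x:{a..b}|lborel. f x * (LINT y:{a..x}|lborel. (1::real))) = (LINT x:{a..b}|lborel. x * f x - a * f x)"
    by (rule set_lebesgue_integral_cong) (auto simp: one algebra_simps)
  have e2: "(LINT x:{a..b}|lborel. (LINT y:{a..x}|lborel. f y) * 1) = (LINT x:{a..b}|lborel. (w x)^2 / 2 - (w a)^2 / 2)"
    by (rule set_lebesgue_integral_cong) (auto simp: fint diff_divide_distrib)
  have xwc: "continuous_on {a..b} (\<lambda>x. x * w x)" by (intro continuous_intros cw)
  have xfi: "set_integrable lborel {a..b} (\<lambda>x. x * f x)"
    using int_cont_mult[OF xwc gi] by (simp add: f_def mult.assoc)
  have w2i: "set_integrable lborel {a..b} (\<lambda>x. (w x)^2 / 2)"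
    by (rule borel_integrable_atLeastAtMost') (auto intro!: continuous_intros cw)
  have ci: "set_integrable lborel {a..b} (\<lambda>x. (w a)^2 / 2)"
    by (rule borel_integrable_atLeastAtMost') simp
  have afi: "set_integrable lborel {a..b} (\<lambda>x. a * f x)" using fi by auto
  have d1: "(LINT x:{a..b}|lborel. x * f x - a * f x) = (LINT x:{a..b}|lborel. x * f x) - a * (LINT x:{a..b}|lborel. f x)"
    using set_integral_diff(2)[OF xfi afi] by simp
  have d2: "(LINT x:{a..b}|lborel. (w x)^2 / 2 - (w a)^2 / 2) = (LINT x:{a..b}|lborel. (w x)^2) / 2 - (w a)^2 / 2 * (b - a)"
    using set_integral_diff(2)[OF w2i ci] ab by (simp add: set_integral_const)
  have ob: "(LINT y:{a..b}|lborel. (1::real)) = b - a" using one ab by simp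
  have fb: "(LINT x:{a..b}|lborel. f x) = ((w b)^2 - (w a)^2) / 2" using fint ab by simp
  have main: "(LINT x:{a..b}|lborel. x * f x) - a * (((w b)^2 - (w a)^2) / 2)
      + ((LINT x:{a..b}|lborel. (w x)^2) / 2 - (w a)^2 / 2 * (b - a)) = ((w b)^2 - (w a)^2) / 2 * (b - a)"
    using GLr(3) e1 e2 d1 d2 ob fb by simp
  have eqP: "(LINT x:{a..b}|lborel. x * w x * g x) = (LINT x:{a..b}|lborel. x * f x)"
    by (simp add: f_def mult.assoc)
  show ?thesis unfolding eqP using main by (simp add: field_simps)
qed

definition sn :: "real \<Rightarrow> nat \<Rightarrow> real" where "sn xm n = xm / 3 * inverse (real (Suc n))"

lemma sn_props:
  assumes "xm > 0"
  shows "0 < sn xm n" "sn xm n < xm - sn xm n" "xm - sn xm n < xm" "sn xm \<longlonglongrightarrow> 0"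
    "{sn xm n..xm - sn xm n} \<subseteq> Omega xm"
proof -
  have a: "0 < sn xm n" using assms by (simp add: sn_def)
  have b: "sn xm n \<le> xm / 3" using assms by (simp add: sn_def field_simps)
  show "0 < sn xm n" by (rule a)
  show "sn xm n < xm - sn xm n" using b assms by simp
  show "xm - sn xm n < xm" using a by simp
  have "(\<lambda>n. xm / 3 * inverse (real (Suc n))) \<longlonglongrightarrow> xm / 3 * 0"
    by (intro tendsto_mult tendsto_const LIMSEQ_inverse_real_of_nat)
  then show "sn xm \<longlonglongrightarrow> 0" by (simp add: sn_def[abs_def])
  show "{sn xm n..xm - sn xm n} \<subseteq> Omega xm" using a by (auto simp: Omega_def)
qed

lemma lim_int:
  fixes F :: "real \<Rightarrow> real" and xm :: real
  assumes xm: "xm > 0" and Fi: "integrable lborel (\<lambda>x. indicator (Omega xm) x * F x)"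
  shows "(\<lambda>n. LINT x:{sn xm n..xm - sn xm n}|lborel. F x) \<longlonglongrightarrow> (LINT x:Omega xm|lborel. F x)"
proof -
  note S = sn_props[OF xm]
  have Fm: "(\<lambda>x. indicator (Omega xm) x * F x) \<in> borel_measurable lborel"
    by (rule borel_measurable_integrable[OF Fi])
  have eq: "indicator {sn xm n..xm - sn xm n} x * F x = indicator {sn xm n..xm - sn xm n} x * (indicator (Omega xm) x * F x)" for n x
    using S(5)[of n] by (auto simp: indicator_def)
  have "(\<lambda>n. LINT x|lborel. indicator {sn xm n..xm - sn xm n} x * F x) \<longlonglongrightarrow> (LINT x|lborel. indicator (Omega xm) x * F x)"
  proof (rule integral_dominated_convergence[where w="\<lambda>x. \<bar>indicator (Omega xm) x * F x\<bar>"])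
    show "(\<lambda>x. indicator (Omega xm) x * F x) \<in> borel_measurable lborel" by (rule Fm)
    show "(\<lambda>x. indicator {sn xm n..xm - sn xm n} x * F x) \<in> borel_measurable lborel" for n
      unfolding eq using Fm by measurable
    show "integrable lborel (\<lambda>x. \<bar>indicator (Omega xm) x * F x\<bar>)" using Fi by (rule integrable_abs)
    show "AE x in lborel. norm (indicator {sn xm n..xm - sn xm n} x * F x) \<le> \<bar>indicator (Omega xm) x * F x\<bar>" for n
      unfolding eq by (rule AE_I2) (auto simp: indicator_def)
    show "AE x in lborel. (\<lambda>n. indicator {sn xm n..xm - sn xm n} x * F x) \<longlonglongrightarrow> indicator (Omega xm) x * F x"
    proof (rule AE_I2)
      fix x
      show "(\<lambda>n. indicator {sn xm n..xm - sn xm n} x * F x) \<longlonglongrightarrow> indicator (Omega xm) x * F x"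
      proof (cases "x \<in> Omega xm")
        case True
        then have x: "0 < x" "x < xm" by (auto simp: Omega_def)
        have e1: "eventually (\<lambda>n. sn xm n < min x (xm - x)) sequentially"
          using order_tendstoD(2)[OF S(4), of "min x (xm - x)"] x by simp
        have "eventually (\<lambda>n. indicator {sn xm n..xm - sn xm n} x * F x = indicator (Omega xm) x * F x) sequentially"
          using e1 by eventually_elim (use True in \<open>auto simp: indicator_def\<close>)
        then show ?thesis by (rule tendsto_eventually)
      next
        case False
        then have "indicator {sn xm n..xm - sn xm n} x * F x = indicator (Omega xm) x * F x" for n
          using S(5)[of n] False by (auto simp: indicator_def)
        then show ?thesis by (simp only: tendsto_const)
      qed
    qed
  qed
  then show ?thesis by (simp add: set_lebesgue_integral_def)
qed

lemma set_int_point: "(LINT x:{c..c}|lborel. (f x::real)) = 0" for c :: real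
  unfolding set_lebesgue_integral_def
proof (rule integral_eq_zero_AE)
  show "AE x in lborel. indicator {c..c} x *\<^sub>R f x = 0"
    using AE_lborel_singleton[of c] by eventually_elim (simp add: indicator_def)
qed

lemma ind_prod: "indicator A x * (p x * q x) = (indicator A x *\<^sub>R p x) * (indicator A x *\<^sub>R (q x::real))"
  by (simp add: indicator_def)

lemma L2prod:
  fixes p q :: "real \<Rightarrow> real"
  assumes pm: "set_borel_measurable lborel A p" and qm: "set_borel_measurable lborel A q"
    and p2: "set_integrable lborel A (\<lambda>x. (p x)^2)" and q2: "set_integrable lborel A (\<lambda>x. (q x)^2)"
  shows "set_integrable lborel A (\<lambda>x. p x * q x)"
proof -
  have pm': "(\<lambda>x. indicator A x *\<^sub>R p x) \<in> borel_measurable lborel" using pm by (simp add: set_borel_measurable_def)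
  have qm': "(\<lambda>x. indicator A x *\<^sub>R q x) \<in> borel_measurable lborel" using qm by (simp add: set_borel_measurable_def)
  have i: "integrable lborel (\<lambda>x. indicator A x * (p x)^2 + indicator A x * (q x)^2)"
    using p2 q2 unfolding set_integrable_def by simp
  have m: "(\<lambda>x. indicator A x * (p x * q x)) \<in> borel_measurable lborel"
    unfolding ind_prod using pm' qm' by measurable
  have "integrable lborel (\<lambda>x. indicator A x * (p x * q x))"
  proof (rule Bochner_Integration.integrable_bound[OF i m])
    show "AE x in lborel. norm (indicator A x * (p x * q x)) \<le> norm (indicator A x * (p x)^2 + indicator A x * (q x)^2)"
    proof (rule AE_I2)
      fix x
      have "\<bar>p x * q x\<bar> \<le> (p x)^2 + (q x)^2"
      proof -
        have h0: "0 \<le> (\<bar>p x\<bar> - \<bar>q x\<bar>)^2" by simp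
        have e: "(\<bar>p x\<bar> - \<bar>q x\<bar>)^2 = (p x)^2 + (q x)^2 - 2 * (\<bar>p x\<bar> * \<bar>q x\<bar>)"
          by (simp add: power2_eq_square algebra_simps)
        have "0 \<le> \<bar>p x\<bar> * \<bar>q x\<bar>" by simp
        then show ?thesis using h0 e unfolding abs_mult by linarith
      qed
      then show "norm (indicator A x * (p x * q x)) \<le> norm (indicator A x * (p x)^2 + indicator A x * (q x)^2)"
        by (auto simp: indicator_def)
    qed
  qed
  then show ?thesis by (simp add: set_integrable_def)
qed

lemma gbound: "\<bar>y\<bar> \<le> 1 + (y::real)^2"
proof (cases "\<bar>y\<bar> \<le> 1")
  case True then show ?thesis using zero_le_power2[of y] by linarith
next
  case False
  have "\<bar>y\<bar> * 1 \<le> \<bar>y\<bar> * \<bar>y\<bar>" by (rule mult_left_mono) (use False in auto)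
  moreover have "\<bar>y\<bar> * \<bar>y\<bar> = y^2" by (simp add: power2_eq_square)
  ultimately show ?thesis by linarith
qed

lemma g_local:
  fixes g :: "real \<Rightarrow> real"
  assumes gm: "set_borel_measurable lborel (Omega xm) g"
    and g2: "set_integrable lborel (Omega xm) (\<lambda>x. x^2 * (g x)^2)"
    and ab: "0 < a" "b < xm"
  shows "set_integrable lborel {a..b} g"
proof (cases "a \<le> b")
  case False
  then have "{a..b} = {}" by simp
  then show ?thesis by (simp add: set_integrable_def)
next
  case True
  have sub: "{a..b} \<subseteq> Omega xm" using ab by (auto simp: Omega_def)
  have g2': "set_integrable lborel {a..b} (\<lambda>x. x^2 * (g x)^2)"
    by (rule set_integrable_subset[OF g2 _ sub]) simp
  have one: "set_integrable lborel {a..b} (\<lambda>x. 1::real)"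
    by (rule borel_integrable_atLeastAtMost') simp
  have i: "integrable lborel (\<lambda>x. indicator {a..b} x * 1 + indicator {a..b} x * (x^2 * (g x)^2) / a^2)"
    using one g2' unfolding set_integrable_def by simp
  have gm': "(\<lambda>x. indicator (Omega xm) x *\<^sub>R g x) \<in> borel_measurable lborel"
    using gm by (simp add: set_borel_measurable_def)
  have m: "(\<lambda>x. indicator {a..b} x * g x) \<in> borel_measurable lborel"
  proof -
    have "(\<lambda>x. indicator {a..b} x * (indicator (Omega xm) x *\<^sub>R g x)) \<in> borel_measurable lborel"
      using gm' by measurable
    moreover have "(\<lambda>x. indicator {a..b} x * (indicator (Omega xm) x *\<^sub>R g x)) = (\<lambda>x. indicator {a..b} x * g x)"
      using sub by (auto simp: fun_eq_iff indicator_def)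
    ultimately show ?thesis by simp
  qed
  have "integrable lborel (\<lambda>x. indicator {a..b} x * g x)"
  proof (rule Bochner_Integration.integrable_bound[OF i m])
    show "AE x in lborel. norm (indicator {a..b} x * g x) \<le> norm (indicator {a..b} x * 1 + indicator {a..b} x * (x^2 * (g x)^2) / a^2)"
    proof (rule AE_I2)
      fix x
      show "norm (indicator {a..b} x * g x) \<le> norm (indicator {a..b} x * 1 + indicator {a..b} x * (x^2 * (g x)^2) / a^2)"
      proof (cases "x \<in> {a..b}")
        case False then show ?thesis by simp
      next
        case xin: True
        have "a^2 \<le> x^2" using xin ab by (intro power_mono) auto
        then have "(g x)^2 \<le> x^2 * (g x)^2 / a^2" using ab
          by (simp add: field_simps mult_right_mono)
        moreover have "\<bar>g x\<bar> \<le> 1 + (g x)^2"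
          by (rule gbound)
        moreover have "0 \<le> x^2 * (g x)^2 / a^2" by simp
        ultimately show ?thesis using xin by simp
      qed
    qed
  qed
  then show ?thesis by (simp add: set_integrable_def)
qed

lemma ibp_global:
  fixes v g :: "real \<Rightarrow> real" and xm :: real
  assumes xm: "xm > 0" and H: "H10w xm v g"
  shows "(LINT x:Omega xm|lborel. x * v x * g x) = - (LINT x:Omega xm|lborel. (v x)^2) / 2"
proof -
  define Om where "Om = Omega xm"
  from H have vm: "set_borel_measurable lborel Om v" and v2: "set_integrable lborel Om (\<lambda>x. (v x)^2)"
    and gm: "set_borel_measurable lborel Om g" and g2: "set_integrable lborel Om (\<lambda>x. x^2 * (g x)^2)"
    and wd: "weak_deriv xm v g"
    unfolding H10w_def H1w_def L2_def L2w_def Om_def by auto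
  from H obtain w where ae: "AE x in lborel. x \<in> Om \<longrightarrow> w x = v x" and wc: "continuous_on Om w"
     and l0: "(w \<longlongrightarrow> 0) (at_right 0)" and l1: "(w \<longlongrightarrow> 0) (at_left xm)"
    unfolding H10w_def Om_def by auto
  have gi: "\<And>a b. 0 < a \<Longrightarrow> b < xm \<Longrightarrow> set_integrable lborel {a..b} g"
    using g_local[OF gm[unfolded Om_def] g2[unfolded Om_def]] by auto
  have Oset: "Om \<in> sets borel" by (simp add: Omega_def Om_def)
  have wm: "(\<lambda>x. indicator Om x *\<^sub>R w x) \<in> borel_measurable lborel"
    using borel_measurable_continuous_on_indicator[OF Oset wc] by simp
  have vm': "(\<lambda>x. indicator Om x *\<^sub>R v x) \<in> borel_measurable lborel" using vm by (simp add: set_borel_measurable_def)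
  have gm': "(\<lambda>x. indicator Om x *\<^sub>R g x) \<in> borel_measurable lborel" using gm by (simp add: set_borel_measurable_def)
  define xg where "xg x = x * g x" for x
  have xgm: "set_borel_measurable lborel Om xg"
  proof -
    have "(\<lambda>x. x * (indicator Om x *\<^sub>R g x)) \<in> borel_measurable lborel" using gm' by measurable
    moreover have "(\<lambda>x. x * (indicator Om x *\<^sub>R g x)) = (\<lambda>x. indicator Om x *\<^sub>R xg x)"
      by (auto simp: fun_eq_iff xg_def indicator_def)
    ultimately show ?thesis by (simp add: set_borel_measurable_def)
  qed
  have xg2: "set_integrable lborel Om (\<lambda>x. (xg x)^2)" using g2 by (simp add: xg_def power_mult_distrib)
  have vxg: "set_integrable lborel Om (\<lambda>x. v x * xg x)" by (rule L2prod[OF vm xgm v2 xg2])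
  have m1w: "(\<lambda>x. indicator Om x * (x * w x * g x)) \<in> borel_measurable lborel"
  proof -
    have "(\<lambda>x. x * (indicator Om x *\<^sub>R w x) * (indicator Om x *\<^sub>R g x)) \<in> borel_measurable lborel"
      using wm gm' by measurable
    moreover have "(\<lambda>x. x * (indicator Om x *\<^sub>R w x) * (indicator Om x *\<^sub>R g x)) = (\<lambda>x. indicator Om x * (x * w x * g x))"
      by (auto simp: fun_eq_iff indicator_def)
    ultimately show ?thesis by simp
  qed
  have m1v: "(\<lambda>x. indicator Om x * (x * v x * g x)) \<in> borel_measurable lborel"
  proof -
    have "(\<lambda>x. x * (indicator Om x *\<^sub>R v x) * (indicator Om x *\<^sub>R g x)) \<in> borel_measurable lborel"
      using vm' gm' by measurable
    moreover have "(\<lambda>x. x * (indicator Om x *\<^sub>R v x) * (indicator Om x *\<^sub>R g x)) = (\<lambda>x. indicator Om x * (x * v x * g x))"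
      by (auto simp: fun_eq_iff indicator_def)
    ultimately show ?thesis by simp
  qed
  have m2w: "(\<lambda>x. indicator Om x * (w x)^2) \<in> borel_measurable lborel"
  proof -
    have "(\<lambda>x. (indicator Om x *\<^sub>R w x)^2) \<in> borel_measurable lborel" using wm by measurable
    moreover have "(\<lambda>x. (indicator Om x *\<^sub>R w x)^2) = (\<lambda>x. indicator Om x * (w x)^2)"
      by (auto simp: fun_eq_iff indicator_def)
    ultimately show ?thesis by simp
  qed
  have m2v: "(\<lambda>x. indicator Om x * (v x)^2) \<in> borel_measurable lborel"
  proof -
    have "(\<lambda>x. (indicator Om x *\<^sub>R v x)^2) \<in> borel_measurable lborel" using vm' by measurable
    moreover have "(\<lambda>x. (indicator Om x *\<^sub>R v x)^2) = (\<lambda>x. indicator Om x * (v x)^2)"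
      by (auto simp: fun_eq_iff indicator_def)
    ultimately show ?thesis by simp
  qed
  have ae1: "AE x in lborel. indicator Om x * (x * w x * g x) = indicator Om x * (x * v x * g x)"
    using ae by eventually_elim (auto simp: indicator_def)
  have ae2: "AE x in lborel. indicator Om x * (w x)^2 = indicator Om x * (v x)^2"
    using ae by eventually_elim (auto simp: indicator_def)
  have I1v: "integrable lborel (\<lambda>x. indicator Om x * (x * v x * g x))"
    using vxg by (simp add: set_integrable_def xg_def mult_ac)
  have I1: "integrable lborel (\<lambda>x. indicator Om x * (x * w x * g x))"
    using integrable_cong_AE[OF m1w m1v ae1] I1v by simp
  have I2v: "integrable lborel (\<lambda>x. indicator Om x * (v x)^2)"
    using v2 by (simp add: set_integrable_def)
  have I2: "integrable lborel (\<lambda>x. indicator Om x * (w x)^2)"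
    using integrable_cong_AE[OF m2w m2v ae2] I2v by simp
  note S = sn_props[OF xm]
  define a where "a n = sn xm n" for n
  define b where "b n = xm - sn xm n" for n
  have eqn: "(LINT x:{a n..b n}|lborel. x * w x * g x)
      = (b n * (w (b n))^2 - a n * (w (a n))^2) / 2 - (LINT x:{a n..b n}|lborel. (w x)^2) / 2" for n
  proof (rule ibp_x)
    have sub: "{a n..b n} \<subseteq> Om" using S(5)[of n] by (simp add: a_def b_def Om_def)
    show "continuous_on {a n..b n} w" by (rule continuous_on_subset[OF wc sub])
    show "set_integrable lborel {a n..b n} g" using S(1)[of n] S(3)[of n] by (intro gi) (auto simp: a_def b_def)
    show "a n \<le> b n" using S(2)[of n] by (simp add: a_def b_def)
    fix x assume x: "x \<in> {a n..b n}"
    show "w x - w (a n) = (LINT y:{a n..x}|lborel. g y)"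
    proof (cases "x = a n")
      case True then show ?thesis using set_int_point[of "a n" g] by simp
    next
      case False
      show ?thesis
      proof (rule step1[OF wd vm[unfolded Om_def] _ wc[unfolded Om_def] gi])
        show "AE x in lborel. x \<in> Omega xm \<longrightarrow> w x = v x" using ae by (simp add: Om_def)
        show "0 < a n" using S(1)[of n] by (simp add: a_def)
        show "a n < x" using x False by simp
        show "x < xm" using x S(3)[of n] by (simp add: b_def)
      qed
    qed
  qed
  have A: "(\<lambda>n. LINT x:{a n..b n}|lborel. x * w x * g x) \<longlonglongrightarrow> (LINT x:Om|lborel. x * w x * g x)"
    unfolding a_def b_def Om_def by (rule lim_int[OF xm I1[unfolded Om_def]])
  have B: "(\<lambda>n. LINT x:{a n..b n}|lborel. (w x)^2) \<longlonglongrightarrow> (LINT x:Om|lborel. (w x)^2)"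
    unfolding a_def b_def Om_def by (rule lim_int[OF xm I2[unfolded Om_def]])
  have a0: "a \<longlonglongrightarrow> 0" using S(4) by (simp add: a_def[abs_def])
  have fa: "filterlim a (at_right 0) sequentially"
  proof -
    have "\<forall>n. a n \<in> {0<..} \<and> a n \<noteq> 0"
    proof
      fix n show "a n \<in> {0<..} \<and> a n \<noteq> 0" using S(1)[of n] by (simp add: a_def)
    qed
    then show ?thesis unfolding filterlim_at using a0 by (simp add: always_eventually)
  qed
  have fb: "filterlim b (at_left xm) sequentially"
  proof -
    have "(\<lambda>n. xm - sn xm n) \<longlonglongrightarrow> xm - 0" by (intro tendsto_diff tendsto_const S(4))
    moreover have "\<forall>n. b n \<in> {..<xm} \<and> b n \<noteq> xm"
    proof
      fix n show "b n \<in> {..<xm} \<and> b n \<noteq> xm" using S(3)[of n] by (simp add: b_def)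
    qed
    ultimately show ?thesis unfolding filterlim_at by (simp add: always_eventually b_def[abs_def])
  qed
  have wa: "(\<lambda>n. w (a n)) \<longlonglongrightarrow> 0" by (rule filterlim_compose[OF l0 fa])
  have wb: "(\<lambda>n. w (b n)) \<longlonglongrightarrow> 0" by (rule filterlim_compose[OF l1 fb])
  have b0: "b \<longlonglongrightarrow> xm" using fb by (simp add: filterlim_at)
  have C: "(\<lambda>n. (b n * (w (b n))^2 - a n * (w (a n))^2) / 2 - (LINT x:{a n..b n}|lborel. (w x)^2) / 2)
      \<longlonglongrightarrow> (xm * 0^2 - 0 * 0^2) / 2 - (LINT x:Om|lborel. (w x)^2) / 2"
    by (intro tendsto_intros wa wb a0 b0 B) auto
  have "(LINT x:Om|lborel. x * w x * g x) = (xm * 0^2 - 0 * 0^2) / 2 - (LINT x:Om|lborel. (w x)^2) / 2"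
    using LIMSEQ_unique[OF A C[folded eqn]] .
  moreover have "(LINT x:Om|lborel. x * w x * g x) = (LINT x:Om|lborel. x * v x * g x)"
    unfolding set_lebesgue_integral_def using integral_cong_AE[OF m1w m1v ae1] by simp
  moreover have "(LINT x:Om|lborel. (w x)^2) = (LINT x:Om|lborel. (v x)^2)"
    unfolding set_lebesgue_integral_def using integral_cong_AE[OF m2w m2v ae2] by simp
  ultimately show ?thesis by (simp add: Om_def)
qed

lemma Omega_sets[simp]: "Omega xm \<in> sets borel" by (simp add: Omega_def)

lemma quad_disc:
  fixes P R Q :: real
  assumes P: "P \<ge> 0" and all: "\<And>l. 0 \<le> l^2 * P + 2 * l * R + Q"
  shows "R^2 \<le> P * Q"
proof (cases "P = 0")
  case True
  have "R = 0"
  proof (rule ccontr)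
    assume R: "R \<noteq> 0"
    have "0 \<le> (-(Q+1)/(2*R))^2 * P + 2 * (-(Q+1)/(2*R)) * R + Q" by (rule all)
    also have "\<dots> = -1" using True R by (simp add: field_simps)
    finally show False by simp
  qed
  then show ?thesis using True by simp
next
  case False
  then have Pp: "P > 0" using P by simp
  have "0 \<le> (-R/P)^2 * P + 2 * (-R/P) * R + Q" by (rule all)
  also have "\<dots> = Q - R^2 / P" using Pp by (simp add: field_simps power2_eq_square)
  finally have "R^2 / P \<le> Q" by simp
  then show ?thesis using Pp by (simp add: divide_le_eq mult.commute)
qed

lemma set_sq_nonneg: "0 \<le> (LINT x:A|lborel. ((f x)::real)^2)"
  unfolding set_lebesgue_integral_def by (rule integral_nonneg_AE) (auto simp: indicator_def)

lemma CS_set: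
  fixes p q :: "real \<Rightarrow> real"
  assumes Aset: "A \<in> sets borel" and pm: "set_borel_measurable lborel A p" and qm: "set_borel_measurable lborel A q"
    and p2: "set_integrable lborel A (\<lambda>x. (p x)^2)" and q2: "set_integrable lborel A (\<lambda>x. (q x)^2)"
  shows "\<bar>LINT x:A|lborel. p x * q x\<bar> \<le> sqrt (LINT x:A|lborel. (p x)^2) * sqrt (LINT x:A|lborel. (q x)^2)"
proof -
  define P where "P = (LINT x:A|lborel. (p x)^2)"
  define Q where "Q = (LINT x:A|lborel. (q x)^2)"
  define R where "R = (LINT x:A|lborel. p x * q x)"
  have pq: "set_integrable lborel A (\<lambda>x. p x * q x)" by (rule L2prod[OF pm qm p2 q2])
  have "R^2 \<le> P * Q"
  proof (rule quad_disc)
    show "P \<ge> 0" unfolding P_def by (rule set_sq_nonneg)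
    fix l :: real
    have i1: "set_integrable lborel A (\<lambda>x. l^2 * (p x)^2)" using p2 by auto
    have i2: "set_integrable lborel A (\<lambda>x. 2 * l * (p x * q x))" using pq by auto
    have "(LINT x:A|lborel. (l * p x + q x)^2) = (LINT x:A|lborel. (l^2 * (p x)^2 + 2 * l * (p x * q x)) + (q x)^2)"
      by (rule set_lebesgue_integral_cong) (use Aset in \<open>auto simp: power2_eq_square algebra_simps\<close>)
    also have "\<dots> = (LINT x:A|lborel. l^2 * (p x)^2 + 2 * l * (p x * q x)) + Q"
      unfolding Q_def by (rule set_integral_add(2)[OF set_integral_add(1)[OF i1 i2] q2])
    also have "(LINT x:A|lborel. l^2 * (p x)^2 + 2 * l * (p x * q x)) = l^2 * P + 2 * l * R"
      unfolding P_def R_def using set_integral_add(2)[OF i1 i2] by simp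
    finally have "(LINT x:A|lborel. (l * p x + q x)^2) = l^2 * P + 2 * l * R + Q" .
    moreover have "0 \<le> (LINT x:A|lborel. (l * p x + q x)^2)" by (rule set_sq_nonneg)
    ultimately show "0 \<le> l^2 * P + 2 * l * R + Q" by simp
  qed
  then have "sqrt (R^2) \<le> sqrt (P * Q)" by (rule real_sqrt_le_mono)
  then show ?thesis by (simp add: P_def Q_def R_def real_sqrt_mult)
qed

lemma H10w_facts:
  assumes "H10w xm v g"
  shows "set_borel_measurable lborel (Omega xm) v" "set_integrable lborel (Omega xm) (\<lambda>x. (v x)^2)"
    "set_borel_measurable lborel (Omega xm) (\<lambda>x. x * g x)" "set_integrable lborel (Omega xm) (\<lambda>x. (x * g x)^2)"
proof -
  from assms have vm: "set_borel_measurable lborel (Omega xm) v" and v2: "set_integrable lborel (Omega xm) (\<lambda>x. (v x)^2)"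
    and gm: "set_borel_measurable lborel (Omega xm) g" and g2: "set_integrable lborel (Omega xm) (\<lambda>x. x^2 * (g x)^2)"
    unfolding H10w_def H1w_def L2_def L2w_def by auto
  show "set_borel_measurable lborel (Omega xm) v" "set_integrable lborel (Omega xm) (\<lambda>x. (v x)^2)" by fact+
  have "(\<lambda>x. x * (indicator (Omega xm) x *\<^sub>R g x)) \<in> borel_measurable lborel"
    using gm unfolding set_borel_measurable_def by measurable
  moreover have "(\<lambda>x. x * (indicator (Omega xm) x *\<^sub>R g x)) = (\<lambda>x. indicator (Omega xm) x *\<^sub>R (x * g x))"
    by (auto simp: fun_eq_iff indicator_def)
  ultimately show "set_borel_measurable lborel (Omega xm) (\<lambda>x. x * g x)"
    by (simp add: set_borel_measurable_def)
  show "set_integrable lborel (Omega xm) (\<lambda>x. (x * g x)^2)" using g2 by (simp add: power_mult_distrib)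
qed

lemma bil_exp:
  assumes Hz: "H10w xm z gz" and Hv: "H10w xm v gv"
  shows "(LINT x:Omega xm|lborel. (a * x^2 * gz x + b * x * z x) * gv x) + (LINT x:Omega xm|lborel. c * z x * v x)
     = a * (LINT x:Omega xm|lborel. (x * gz x) * (x * gv x)) + b * (LINT x:Omega xm|lborel. z x * (x * gv x))
       + c * (LINT x:Omega xm|lborel. z x * v x)"
proof -
  note fz = H10w_facts[OF Hz] and fv = H10w_facts[OF Hv]
  have i1: "set_integrable lborel (Omega xm) (\<lambda>x. (x * gz x) * (x * gv x))" by (rule L2prod[OF fz(3) fv(3) fz(4) fv(4)])
  have i2: "set_integrable lborel (Omega xm) (\<lambda>x. z x * (x * gv x))" by (rule L2prod[OF fz(1) fv(3) fz(2) fv(4)])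
  have i1': "set_integrable lborel (Omega xm) (\<lambda>x. a * ((x * gz x) * (x * gv x)))" using i1 by auto
  have i2': "set_integrable lborel (Omega xm) (\<lambda>x. b * (z x * (x * gv x)))" using i2 by auto
  have "(LINT x:Omega xm|lborel. (a * x^2 * gz x + b * x * z x) * gv x)
      = (LINT x:Omega xm|lborel. a * ((x * gz x) * (x * gv x)) + b * (z x * (x * gv x)))"
    by (rule set_lebesgue_integral_cong) (auto simp: power2_eq_square algebra_simps)
  also have "\<dots> = a * (LINT x:Omega xm|lborel. (x * gz x) * (x * gv x)) + b * (LINT x:Omega xm|lborel. z x * (x * gv x))"
    using set_integral_add(2)[OF i1' i2'] by simp
  finally have e1: "(LINT x:Omega xm|lborel. (a * x^2 * gz x + b * x * z x) * gv x) =
     a * (LINT x:Omega xm|lborel. (x * gz x) * (x * gv x)) + b * (LINT x:Omega xm|lborel. z x * (x * gv x))" .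
  have e2: "(LINT x:Omega xm|lborel. c * z x * v x) = c * (LINT x:Omega xm|lborel. z x * v x)"
    by (simp add: mult.assoc)
  show ?thesis using e1 e2 by simp
qed

theorem mainTheorem1:
  fixes xmax T rbar slo shi :: real and r \<sigma> :: "real \<Rightarrow> real"
  assumes "xmax > 0" and "T > 0"
    and "continuous_on {0..T} r" and "continuous_on {0..T} \<sigma>"
    and "\<forall>t\<in>{0..T}. 0 \<le> r t \<and> r t \<le> rbar"
    and "\<forall>t\<in>{0..T}. slo \<le> \<sigma> t \<and> \<sigma> t \<le> shi"
    and "slo > 0"
  shows "\<exists>C>0. \<exists>M>0. \<forall>t\<in>{0..T}. \<forall>v gv z gz.
           H10w xmax v gv \<longrightarrow> H10w xmax z gz \<longrightarrow>
             bilinA xmax r \<sigma> T t v gv v gv \<ge> C * (norm1w xmax v gv)^2 \<and>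
             bilinA xmax r \<sigma> T t z gz v gv \<le> M * norm1w xmax z gz * norm1w xmax v gv"
proof -
  note xm = assms(1) and rb = assms(5) and sb = assms(6) and slo = assms(7)
  define \<beta> where "\<beta> = (SUP s\<in>{0..T}. (\<sigma> s)^2)"
  have sq_lo: "slo^2 \<le> (\<sigma> s)^2" if "s \<in> {0..T}" for s
  proof -
    have "slo \<le> \<sigma> s" using sb that by auto
    then show ?thesis using slo by (intro power_mono) auto
  qed
  have sq_hi: "(\<sigma> s)^2 \<le> shi^2" if "s \<in> {0..T}" for s
  proof -
    have "slo \<le> \<sigma> s" "\<sigma> s \<le> shi" using sb that by auto
    then show ?thesis using slo by (intro power_mono) auto
  qed
  have bdd: "bdd_above ((\<lambda>s. (\<sigma> s)^2) ` {0..T})"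
    using sq_hi by (intro bdd_aboveI2) auto
  have bge: "(\<sigma> s)^2 \<le> \<beta>" if "s \<in> {0..T}" for s
    unfolding \<beta>_def using bdd that by (rule cSUP_upper2) simp
  have ble: "\<beta> \<le> shi^2"
    unfolding \<beta>_def using assms(2) sq_hi by (intro cSUP_least) auto
  have rbar0: "0 \<le> rbar" using rb assms(2) by force
  define C where "C = slo^2 / 2"
  define M where "M = shi^2 / 2 + (rbar + shi^2) + (2 * rbar + shi^2) + 1"
  have Cpos: "C > 0" using slo by (simp add: C_def)
  have Mpos: "M > 0" using rbar0 zero_le_power2[of shi] unfolding M_def by linarith
  show ?thesis
  proof (rule exI[of _ C], intro conjI Cpos, rule exI[of _ M], intro conjI Mpos ballI allI impI)
    fix t v gv z gz
    assume t: "t \<in> {0..T}" and Hv: "H10w xmax v gv" and Hz: "H10w xmax z gz"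
    define a where "a = (\<sigma> t)^2 / 2"
    define b where "b = r t - (\<sigma> t)^2"
    define c where "c = 2 * r t + \<beta> - (\<sigma> t)^2"
    have bil: "bilinA xmax r \<sigma> T t z' gz' v' gv' =
       (LINT x:Omega xmax|lborel. (a * x^2 * gz' x + b * x * z' x) * gv' x) + (LINT x:Omega xmax|lborel. c * z' x * v' x)"
      for z' gz' v' gv'
      by (simp only: bilinA_def Let_def a_def b_def c_def \<beta>_def)
    note fz = H10w_facts[OF Hz] and fv = H10w_facts[OF Hv]
    define Yv where "Yv = (LINT x:Omega xmax|lborel. (v x)^2)"
    define Xv where "Xv = (LINT x:Omega xmax|lborel. (x * gv x)^2)"
    define Yz where "Yz = (LINT x:Omega xmax|lborel. (z x)^2)"
    define Xz where "Xz = (LINT x:Omega xmax|lborel. (x * gz x)^2)"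
    have Yv0: "Yv \<ge> 0" "Xv \<ge> 0" "Yz \<ge> 0" "Xz \<ge> 0" unfolding Yv_def Xv_def Yz_def Xz_def
      by (rule set_sq_nonneg)+
    have nv: "norm1w xmax v gv = sqrt (Yv + Xv)" unfolding norm1w_def Yv_def Xv_def
      by (simp add: power_mult_distrib)
    have nz: "norm1w xmax z gz = sqrt (Yz + Xz)" unfolding norm1w_def Yz_def Xz_def
      by (simp add: power_mult_distrib)
    have rt: "0 \<le> r t" "r t \<le> rbar" using rb t by auto
    have st: "slo^2 \<le> (\<sigma> t)^2" "(\<sigma> t)^2 \<le> shi^2" "(\<sigma> t)^2 \<le> \<beta>" using sq_lo sq_hi bge t by auto
    have A1: "bilinA xmax r \<sigma> T t v gv v gv = a * Xv + b * (- Yv / 2) + c * Yv"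
    proof -
      have "bilinA xmax r \<sigma> T t v gv v gv = a * (LINT x:Omega xmax|lborel. (x * gv x) * (x * gv x))
          + b * (LINT x:Omega xmax|lborel. v x * (x * gv x)) + c * (LINT x:Omega xmax|lborel. v x * v x)"
        unfolding bil by (rule bil_exp[OF Hv Hv])
      moreover have "(LINT x:Omega xmax|lborel. (x * gv x) * (x * gv x)) = Xv"
        unfolding Xv_def by (simp add: power2_eq_square)
      moreover have "(LINT x:Omega xmax|lborel. v x * v x) = Yv"
        unfolding Yv_def by (simp add: power2_eq_square)
      moreover have "(LINT x:Omega xmax|lborel. v x * (x * gv x)) = - Yv / 2"
        using ibp_global[OF xm Hv] unfolding Yv_def by (simp add: mult_ac)
      ultimately show ?thesis by simp
    qed
    have "C * (norm1w xmax v gv)^2 = C * Xv + C * Yv" using Yv0 by (simp add: nv algebra_simps)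
    also have "\<dots> \<le> a * Xv + (c - b / 2) * Yv"
    proof (rule add_mono)
      show "C * Xv \<le> a * Xv" using st Yv0 by (intro mult_right_mono) (auto simp: C_def a_def)
      have e: "c - b / 2 = 3/2 * r t + \<beta> - (\<sigma> t)^2 / 2" by (simp add: b_def c_def field_simps)
      have "C \<le> c - b / 2" using st rt unfolding e C_def by linarith
      then show "C * Yv \<le> (c - b / 2) * Yv" using Yv0 by (intro mult_right_mono) auto
    qed
    also have "\<dots> = bilinA xmax r \<sigma> T t v gv v gv" unfolding A1 by (simp add: algebra_simps)
    finally show "C * (norm1w xmax v gv)^2 \<le> bilinA xmax r \<sigma> T t v gv v gv" .
    define P where "P = (LINT x:Omega xmax|lborel. (x * gz x) * (x * gv x))"
    define Q where "Q = (LINT x:Omega xmax|lborel. z x * (x * gv x))"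
    define R where "R = (LINT x:Omega xmax|lborel. z x * v x)"
    have A2: "bilinA xmax r \<sigma> T t z gz v gv = a * P + b * Q + c * R"
      unfolding bil P_def Q_def R_def by (rule bil_exp[OF Hz Hv])
    have cP: "\<bar>P\<bar> \<le> sqrt Xz * sqrt Xv" unfolding P_def Xz_def Xv_def
      by (rule CS_set[OF Omega_sets fz(3) fv(3) fz(4) fv(4)])
    have cQ: "\<bar>Q\<bar> \<le> sqrt Yz * sqrt Xv" unfolding Q_def Yz_def Xv_def
      by (rule CS_set[OF Omega_sets fz(1) fv(3) fz(2) fv(4)])
    have cR: "\<bar>R\<bar> \<le> sqrt Yz * sqrt Yv" unfolding R_def Yz_def Yv_def
      by (rule CS_set[OF Omega_sets fz(1) fv(1) fz(2) fv(2)])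
    define Nz where "Nz = sqrt (Yz + Xz)"
    define Nv where "Nv = sqrt (Yv + Xv)"
    have sz: "sqrt Xz \<le> Nz" "sqrt Yz \<le> Nz" unfolding Nz_def using Yv0 by (auto intro: real_sqrt_le_mono)
    have sv: "sqrt Xv \<le> Nv" "sqrt Yv \<le> Nv" unfolding Nv_def using Yv0 by (auto intro: real_sqrt_le_mono)
    have Nz0: "0 \<le> Nz" unfolding Nz_def using Yv0 by simp
    have P': "\<bar>P\<bar> \<le> Nz * Nv"
      by (rule order_trans[OF cP mult_mono[OF sz(1) sv(1) Nz0 real_sqrt_ge_zero]]) (use Yv0 in simp)
    have Q': "\<bar>Q\<bar> \<le> Nz * Nv"
      by (rule order_trans[OF cQ mult_mono[OF sz(2) sv(1) Nz0 real_sqrt_ge_zero]]) (use Yv0 in simp)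
    have R': "\<bar>R\<bar> \<le> Nz * Nv"
      by (rule order_trans[OF cR mult_mono[OF sz(2) sv(2) Nz0 real_sqrt_ge_zero]]) (use Yv0 in simp)
    have N0: "0 \<le> Nz * Nv" unfolding Nz_def Nv_def using Yv0 by simp
    have sg0: "0 \<le> (\<sigma> t)^2" by simp
    have ba: "\<bar>a\<bar> \<le> shi^2 / 2" unfolding a_def abs_le_iff using st sg0 by linarith
    have bb: "\<bar>b\<bar> \<le> rbar + shi^2" unfolding b_def abs_le_iff using st rt sg0 by linarith
    have bc: "\<bar>c\<bar> \<le> 2 * rbar + shi^2" unfolding c_def abs_le_iff using st rt ble sg0 by linarith
    have "a * P + b * Q + c * R \<le> \<bar>a\<bar> * \<bar>P\<bar> + \<bar>b\<bar> * \<bar>Q\<bar> + \<bar>c\<bar> * \<bar>R\<bar>"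
      unfolding abs_mult[symmetric] by (intro add_mono abs_ge_self)
    also have "\<dots> \<le> \<bar>a\<bar> * (Nz * Nv) + \<bar>b\<bar> * (Nz * Nv) + \<bar>c\<bar> * (Nz * Nv)"
      using P' Q' R' by (intro add_mono mult_left_mono) auto
    also have "\<dots> = (\<bar>a\<bar> + \<bar>b\<bar> + \<bar>c\<bar>) * (Nz * Nv)" by (simp add: algebra_simps)
    also have "\<dots> \<le> M * (Nz * Nv)"
      using ba bb bc N0 by (intro mult_right_mono) (auto simp: M_def)
    finally have fin: "a * P + b * Q + c * R \<le> M * (Nz * Nv)" .
    have "bilinA xmax r \<sigma> T t z gz v gv \<le> M * (norm1w xmax z gz * norm1w xmax v gv)"
      using fin unfolding A2 nz nv Nz_def Nv_def .
    then show "bilinA xmax r \<sigma> T t z gz v gv \<le> M * norm1w xmax z gz * norm1w xmax v gv"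
      by (simp add: mult.assoc)
  qed
qed

end
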